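(* Let $f,h_1,\dots,h_p\colon\mathbb R^n\times\mathbb R^m\to\mathbb R$ be continuously differentiable, $I=\{1,\dots,\ell\}$, $J=\{\ell+1,\dots,p\}$, $\Gamma(x):=\{y\mid h_i(x,y)\le0\ (i\in I),\ h_i(x,y)=0\ (i\in J)\}$, $\varphi(x):=\inf\{f(x,y)\mid y\in\Gamma(x)\}$ and $S(x):=\operatorname{argmin}\{f(x,y)\mid y\in\Gamma(x)\}$. Fix $\bar x\in\operatorname{dom}\Gamma$ and assume one of the following: (a) (A1) for each $x$, $h_i(x,\cdot)$ is convex for $i\in I$ and affine for $i\in J$; (A2) $\Gamma$ is locally bounded at $\bar x$; RCPLD$_\Gamma$ holds at each point of $\{\bar x\}\times\Gamma(\bar x)$; and $\bar x$ is an interior point of $\operatorname{dom}\Gamma$; (b) there is $\bar y\in S(\bar x)$ such that $S$ is inner semicontinuous at $(\bar x,\bar y)$ and RCPLD$_\Gamma$ holds at $(\bar x,\bar y)$. Then $\varphi$ is locally Lipschitz continuous at $\bar x$.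
   Context: $\operatorname{dom}\Gamma:=\{x\mid\Gamma(x)\neq\emptyset\}$; $\inf\emptyset=+\infty$. $\Gamma$ is locally bounded at $\bar x$ if there are a bounded set $B$ and a neighborhood $V$ of $\bar x$ with $\Gamma(x)\subset B$ for $x\in V$. $S$ is inner semicontinuous at $(\bar x,\bar y)$ if for every sequence $x^k\to\bar x$ there is $y^k\to\bar y$ with $y^k\in S(x^k)$ for large $k$. A pair of finite families $((a^i)_{i\in I_1},(b^i)_{i\in I_2})$ is positive-linearly dependent if there are $\alpha_i\ge0$, $\beta_i$, not all zero, with $\sum\alpha_ia^i+\sum\beta_ib^i=0$. $I(\bar x,\bar y):=\{i\in I\mid h_i(\bar x,\bar y)=0\}$. RCPLD$_\Gamma$ holds at $(\bar x,\bar y)\in\operatorname{gph}\Gamma$ if there are a neighborhood $U$ of $(\bar x,\bar y)$ and $\mathcal S\subset J$ such that: (i) $\{\nabla_yh_i(\bar x,\bar y)\mid i\in\mathcal S\}$ is a basis of the span of $\{\nabla_yh_i(\bar x,\bar y)\mid i\in J\}$; (ii) $(\nabla_yh_i(x,y))_{i\in J}$ has constant rank on $U$; (iii) for each $K\subset I(\bar x,\bar y)$ with $((\nabla_yh_i(\bar x,\bar y))_{i\in K},(\nabla_yh_i(\bar x,\bar y))_{i\in\mathcal S})$ positive-linearly dependent, $(\nabla_yh_i(x,y))_{i\in K\cup\mathcal S}$ is linearly dependent for each $(x,y)\in U$. *)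

theory Defs
  imports "HOL-Analysis.Analysis"
begin

definition C1_fun :: "('a::euclidean_space \<Rightarrow> real) \<Rightarrow> bool" where
  "C1_fun g \<longleftrightarrow> (\<exists>g'. (\<forall>z. (g has_derivative blinfun_apply (g' z)) (at z)) \<and> continuous_on UNIV g')"

definition grad_y :: "((real^'n) \<times> (real^'m) \<Rightarrow> real) \<Rightarrow> real^'n \<Rightarrow> real^'m \<Rightarrow> real^'m" where
  "grad_y g x y = (\<chi> j. frechet_derivative g (at (x, y)) (0, axis j 1))"

definition idxI :: "nat \<Rightarrow> nat set" where "idxI l = {1..l}"
definition idxJ :: "nat \<Rightarrow> nat \<Rightarrow> nat set" where "idxJ l p = {l+1..p}"

definition feas :: "(nat \<Rightarrow> (real^'n) \<times> (real^'m) \<Rightarrow> real) \<Rightarrow> nat \<Rightarrow> nat \<Rightarrow> real^'n \<Rightarrow> (real^'m) set" where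
  "feas h l p x = {y. (\<forall>i\<in>idxI l. h i (x, y) \<le> 0) \<and> (\<forall>i\<in>idxJ l p. h i (x, y) = 0)}"

text \<open>Optimal value function (inf of the empty set is +\<infinity>).\<close>
definition optval :: "((real^'n) \<times> (real^'m) \<Rightarrow> real) \<Rightarrow> (nat \<Rightarrow> (real^'n) \<times> (real^'m) \<Rightarrow> real) \<Rightarrow> nat \<Rightarrow> nat \<Rightarrow> real^'n \<Rightarrow> ereal" where
  "optval f h l p x = (INF y\<in>feas h l p x. ereal (f (x, y)))"

definition argminset :: "((real^'n) \<times> (real^'m) \<Rightarrow> real) \<Rightarrow> (nat \<Rightarrow> (real^'n) \<times> (real^'m) \<Rightarrow> real) \<Rightarrow> nat \<Rightarrow> nat \<Rightarrow> real^'n \<Rightarrow> (real^'m) set" where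
  "argminset f h l p x = {y \<in> feas h l p x. \<forall>y'\<in>feas h l p x. f (x, y) \<le> f (x, y')}"

definition domset :: "('a \<Rightarrow> 'b set) \<Rightarrow> 'a set" where
  "domset G = {x. G x \<noteq> {}}"

definition locally_bounded_at :: "('a::topological_space \<Rightarrow> 'b::metric_space set) \<Rightarrow> 'a \<Rightarrow> bool" where
  "locally_bounded_at G xb \<longleftrightarrow> (\<exists>B V. bounded B \<and> open V \<and> xb \<in> V \<and> (\<forall>x\<in>V. G x \<subseteq> B))"

definition inner_semicont_at :: "('a::topological_space \<Rightarrow> 'b::topological_space set) \<Rightarrow> 'a \<Rightarrow> 'b \<Rightarrow> bool" where
  "inner_semicont_at S xb yb \<longleftrightarrow>
     (\<forall>X. X \<longlonglongrightarrow> xb \<longrightarrow> (\<exists>Y. Y \<longlonglongrightarrow> yb \<and> (\<forall>\<^sub>F k in sequentially. Y k \<in> S (X k))))"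

definition lin_dep_fam :: "'i set \<Rightarrow> ('i \<Rightarrow> 'v::real_vector) \<Rightarrow> bool" where
  "lin_dep_fam K v \<longleftrightarrow> (\<exists>c. (\<exists>i\<in>K. c i \<noteq> 0) \<and> (\<Sum>i\<in>K. c i *\<^sub>R v i) = 0)"

definition pos_lin_dep :: "'i set \<Rightarrow> ('i \<Rightarrow> 'v::real_vector) \<Rightarrow> 'i set \<Rightarrow> ('i \<Rightarrow> 'v) \<Rightarrow> bool" where
  "pos_lin_dep K1 a K2 b \<longleftrightarrow> (\<exists>\<alpha> \<beta>. (\<forall>i\<in>K1. \<alpha> i \<ge> 0) \<and> ((\<exists>i\<in>K1. \<alpha> i \<noteq> 0) \<or> (\<exists>i\<in>K2. \<beta> i \<noteq> 0))
       \<and> (\<Sum>i\<in>K1. \<alpha> i *\<^sub>R a i) + (\<Sum>i\<in>K2. \<beta> i *\<^sub>R b i) = 0)"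

definition active_set :: "(nat \<Rightarrow> (real^'n) \<times> (real^'m) \<Rightarrow> real) \<Rightarrow> nat \<Rightarrow> real^'n \<Rightarrow> real^'m \<Rightarrow> nat set" where
  "active_set h l x y = {i \<in> idxI l. h i (x, y) = 0}"

definition RCPLD :: "(nat \<Rightarrow> (real^'n) \<times> (real^'m) \<Rightarrow> real) \<Rightarrow> nat \<Rightarrow> nat \<Rightarrow> real^'n \<Rightarrow> real^'m \<Rightarrow> bool" where
  "RCPLD h l p xb yb \<longleftrightarrow>
    (\<exists>U S. open U \<and> (xb, yb) \<in> U \<and> S \<subseteq> idxJ l p \<and>
      \<comment> \<open>(i) basis of the span\<close>
      \<not> lin_dep_fam S (\<lambda>i. grad_y (h i) xb yb) \<and>
      span ((\<lambda>i. grad_y (h i) xb yb) ` S) = span ((\<lambda>i. grad_y (h i) xb yb) ` idxJ l p) \<and>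
      \<comment> \<open>(ii) constant rank on U\<close>
      (\<forall>(x, y)\<in>U. dim ((\<lambda>i. grad_y (h i) x y) ` idxJ l p) = dim ((\<lambda>i. grad_y (h i) xb yb) ` idxJ l p)) \<and>
      \<comment> \<open>(iii)\<close>
      (\<forall>K \<subseteq> active_set h l xb yb.
         pos_lin_dep K (\<lambda>i. grad_y (h i) xb yb) S (\<lambda>i. grad_y (h i) xb yb) \<longrightarrow>
         (\<forall>(x, y)\<in>U. lin_dep_fam (K \<union> S) (\<lambda>i. grad_y (h i) x y))))"

definition locally_lipschitz_at_ereal :: "('a::metric_space \<Rightarrow> ereal) \<Rightarrow> 'a \<Rightarrow> bool" where
  "locally_lipschitz_at_ereal g xb \<longleftrightarrow>
     (\<exists>e>0. \<exists>L. (\<forall>x\<in>ball xb e. \<bar>g x\<bar> \<noteq> \<infinity>) \<and>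
        L-lipschitz_on (ball xb e) (\<lambda>x. real_of_ereal (g x)))"

end

theory Submission
  imports Defs
begin

lemma C1_D:
  assumes "C1_fun g"
  obtains g' where "\<And>z. (g has_derivative blinfun_apply (g' z)) (at z)" "continuous_on UNIV g'"
  using assms unfolding C1_fun_def by blast

lemma C1_cont: "C1_fun g \<Longrightarrow> continuous_on UNIV g"
  by (metis C1_D continuous_at_imp_continuous_on has_derivative_continuous)

lemma grad_y_eq:
  fixes g :: "(real^'n) \<times> (real^'m) \<Rightarrow> real"
  assumes "\<And>z. (g has_derivative blinfun_apply (g' z)) (at z)"
  shows "grad_y g x y = (\<chi> j. blinfun_apply (g' (x,y)) (0, axis j 1))"
  unfolding grad_y_def using frechet_derivative_at[OF assms[of "(x,y)"]] by simp

lemma lin_inner_axis: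
  fixes L :: "real^'m \<Rightarrow> real"
  assumes "linear L"
  shows "L v = (\<chi> j. L (axis j 1)) \<bullet> v"
proof -
  have "L v = L (\<Sum>j\<in>UNIV. v$j *\<^sub>R axis j 1)"
    using basis_expansion[of v] by (simp add: scalar_mult_eq_scaleR)
  also have "\<dots> = (\<Sum>j\<in>UNIV. v$j * L (axis j 1))"
    using assms by (simp add: linear_sum linear_scale)
  also have "\<dots> = (\<chi> j. L (axis j 1)) \<bullet> v"
    by (simp add: inner_vec_def mult.commute)
  finally show ?thesis .
qed

lemma grad_y_inner:
  fixes g :: "(real^'n) \<times> (real^'m) \<Rightarrow> real"
  assumes "\<And>z. (g has_derivative blinfun_apply (g' z)) (at z)"
  shows "blinfun_apply (g' (x,y)) (0,v) = grad_y g x y \<bullet> v"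
proof -
  have lin: "linear (\<lambda>v::real^'m. blinfun_apply (g' (x,y)) (0,v))"
  proof -
    have "linear (\<lambda>v::real^'m. (0::real^'n, v))" by (simp add: linear_iff)
    from linear_compose[OF this bounded_linear.linear[OF blinfun.bounded_linear_right]]
    show ?thesis by (simp add: o_def)
  qed
  show ?thesis using lin_inner_axis[OF lin, of v] grad_y_eq[OF assms] by simp
qed

lemma partial_y_deriv:
  fixes g :: "(real^'n) \<times> (real^'m) \<Rightarrow> real"
  assumes "\<And>z. (g has_derivative blinfun_apply (g' z)) (at z)"
  shows "((\<lambda>w. g (x,w)) has_derivative (\<lambda>v. grad_y g x w \<bullet> v)) (at w within T)"
proof -
  have "((\<lambda>w. (x,w)) has_derivative (\<lambda>v. (0,v))) (at w within T)"
    by (auto intro!: derivative_eq_intros)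
  from has_derivative_in_compose[OF this has_derivative_at_withinI[OF assms[of "(x,w)"]]]
  show ?thesis using grad_y_inner[OF assms] by (simp add: o_def)
qed

lemma grad_y_cont:
  fixes g :: "(real^'n) \<times> (real^'m) \<Rightarrow> real"
  assumes "C1_fun g"
  shows "continuous_on UNIV (\<lambda>p. grad_y g (fst p) (snd p))"
proof -
  obtain g' where d: "\<And>z. (g has_derivative blinfun_apply (g' z)) (at z)" and c: "continuous_on UNIV g'"
    using C1_D[OF assms] by blast
  have "(\<lambda>p. grad_y g (fst p) (snd p)) = (\<lambda>p. \<chi> j. blinfun_apply (g' p) (0, axis j 1))"
    using grad_y_eq[OF d] by auto
  moreover have "continuous_on UNIV (\<lambda>p. \<chi> j. blinfun_apply (g' p) (0, axis j 1))"
    by (intro continuous_intros c)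
  ultimately show ?thesis by metis
qed

lemma lemA:
  fixes b :: "nat \<Rightarrow> 'v::euclidean_space"
  assumes fK: "finite K" and fS: "finite S" and np: "\<not> pos_lin_dep K b S b"
  shows "\<exists>c>0. \<forall>\<alpha> \<beta>. (\<forall>i\<in>K. 0 \<le> \<alpha> i) \<longrightarrow>
           c * ((\<Sum>i\<in>K. \<alpha> i) + (\<Sum>i\<in>S. \<bar>\<beta> i\<bar>)) \<le> norm ((\<Sum>i\<in>K. \<alpha> i *\<^sub>R b i) + (\<Sum>i\<in>S. \<beta> i *\<^sub>R b i))"
proof (rule ccontr)
  define N where "N \<alpha> \<beta> = (\<Sum>i\<in>K. \<alpha> i) + (\<Sum>i\<in>S. \<bar>\<beta> i\<bar>)" for \<alpha> \<beta> :: "nat \<Rightarrow> real"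
  define F where "F \<alpha> \<beta> = (\<Sum>i\<in>K. \<alpha> i *\<^sub>R b i) + (\<Sum>i\<in>S. \<beta> i *\<^sub>R b i)" for \<alpha> \<beta> :: "nat \<Rightarrow> real"
  assume "\<not> ?thesis"
  hence "\<forall>n. \<exists>\<alpha> \<beta>. (\<forall>i\<in>K. 0 \<le> \<alpha> i) \<and> norm (F \<alpha> \<beta>) < (1 / Suc n) * N \<alpha> \<beta>"
    unfolding N_def F_def by (metis not_le of_nat_0_less_iff zero_less_Suc zero_less_divide_1_iff)
  then obtain A B where AB: "\<And>n. (\<forall>i\<in>K. 0 \<le> A n i) \<and> norm (F (A n) (B n)) < (1 / Suc n) * N (A n) (B n)"
    by metis
  have Npos: "N (A n) (B n) > 0" for n
  proof -
    have "0 \<le> norm (F (A n) (B n))" by simp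
    with AB[of n] have "0 < (1 / Suc n) * N (A n) (B n)" by linarith
    thus ?thesis by (auto simp: zero_less_divide_iff)
  qed
  define A' where "A' n i = A n i / N (A n) (B n)" for n i
  define B' where "B' n i = B n i / N (A n) (B n)" for n i
  have Ndiv: "N (\<lambda>i. a i / M) (\<lambda>i. bb i / M) = N a bb / M" if "M > 0" for a bb M
    unfolding N_def using that by (simp add: sum_divide_distrib abs_div add_divide_distrib)
  have N1: "N (A' n) (B' n) = 1" for n
  proof -
    have "N (A' n) (B' n) = N (A n) (B n) / N (A n) (B n)"
      using Ndiv[OF Npos[of n]] unfolding A'_def B'_def by simp
    thus ?thesis using Npos[of n] by simp
  qed
  have Fsc: "F (A' n) (B' n) = (1 / N (A n) (B n)) *\<^sub>R F (A n) (B n)" for n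
    unfolding F_def A'_def B'_def by (simp add: scaleR_right.sum scaleR_add_right divide_inverse_commute)
  have Fsmall: "norm (F (A' n) (B' n)) < 1 / Suc n" for n
  proof -
    have "norm (F (A' n) (B' n)) = norm (F (A n) (B n)) / N (A n) (B n)"
      using Fsc Npos[of n] by simp
    also have "\<dots> < 1 / Suc n" using AB[of n] Npos[of n] by (simp add: divide_less_eq)
    finally show ?thesis .
  qed
  have A'nn: "\<forall>i\<in>K. 0 \<le> A' n i" for n using AB[of n] Npos[of n] unfolding A'_def by simp
  have bndK: "\<bar>A' n i\<bar> \<le> 1" if "i \<in> K" for n i
  proof -
    have "\<bar>A' n i\<bar> = A' n i" using A'nn that by simp
    also have "\<dots> \<le> (\<Sum>i\<in>K. A' n i)" using member_le_sum[OF that] A'nn fK by auto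
    also have "\<dots> \<le> N (A' n) (B' n)" unfolding N_def by (simp add: sum_nonneg)
    finally show ?thesis using N1 by simp
  qed
  have bndS: "\<bar>B' n i\<bar> \<le> 1" if "i \<in> S" for n i
  proof -
    have "\<bar>B' n i\<bar> \<le> (\<Sum>i\<in>S. \<bar>B' n i\<bar>)" using member_le_sum[OF that, of "\<lambda>i. \<bar>B' n i\<bar>"] fS by auto
    also have "\<dots> \<le> N (A' n) (B' n)" unfolding N_def using A'nn by (simp add: sum_nonneg)
    finally show ?thesis using N1 by simp
  qed
  define C where "C n = case_sum (A' n) (B' n)" for n
  define bas where "bas = Inl ` K \<union> Inr ` S"
  have "\<forall>d\<subseteq>bas. \<exists>l::nat+nat\<Rightarrow>real. \<exists>r::nat\<Rightarrow>nat. strict_mono r \<and>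
      (\<forall>e>0. eventually (\<lambda>n. \<forall>i\<in>d. dist (C (r n) i) (l i) < e) sequentially)"
  proof (rule compact_lemma_general[where unproj="\<lambda>x. x"])
    show "finite bas" unfolding bas_def using fK fS by simp
    fix k assume "k \<in> bas"
    hence "\<forall>x\<in>range C. \<bar>x k\<bar> \<le> 1" unfolding bas_def C_def using bndK bndS by auto
    thus "bounded ((\<lambda>x. x k) ` range C)" unfolding bounded_iff by auto
  qed auto
  then obtain l r where r: "strict_mono r" and conv: "\<And>e. e>0 \<Longrightarrow> eventually (\<lambda>n. \<forall>i\<in>bas. dist (C (r n) i) (l i) < e) sequentially"
    by blast
  have convi: "(\<lambda>n. C (r n) i) \<longlonglongrightarrow> l i" if "i \<in> bas" for i
    unfolding tendsto_iff
  proof (intro allI impI)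
    fix e :: real assume "e > 0"
    from conv[OF this] show "\<forall>\<^sub>F n in sequentially. dist (C (r n) i) (l i) < e"
      by eventually_elim (use that in auto)
  qed
  define \<alpha> where "\<alpha> i = l (Inl i)" for i
  define \<beta> where "\<beta> i = l (Inr i)" for i
  have cA: "(\<lambda>n. A' (r n) i) \<longlonglongrightarrow> \<alpha> i" if "i \<in> K" for i
    using convi[of "Inl i"] that unfolding bas_def C_def \<alpha>_def by auto
  have cB: "(\<lambda>n. B' (r n) i) \<longlonglongrightarrow> \<beta> i" if "i \<in> S" for i
    using convi[of "Inr i"] that unfolding bas_def C_def \<beta>_def by auto
  have "(\<lambda>n. N (A' (r n)) (B' (r n))) \<longlonglongrightarrow> N \<alpha> \<beta>"
    unfolding N_def by (intro tendsto_intros cA cB) 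
  hence Nl: "N \<alpha> \<beta> = 1" using N1 by (simp add: LIMSEQ_const_iff)
  have "(\<lambda>n. F (A' (r n)) (B' (r n))) \<longlonglongrightarrow> F \<alpha> \<beta>"
    unfolding F_def by (intro tendsto_intros cA cB) 
  moreover have "(\<lambda>n. F (A' (r n)) (B' (r n))) \<longlonglongrightarrow> 0"
  proof (rule tendsto_norm_zero_cancel, rule Lim_null_comparison)
    show "\<forall>\<^sub>F n in sequentially. norm (norm (F (A' (r n)) (B' (r n)))) \<le> 1 / Suc (r n)"
      using Fsmall by (intro always_eventually allI) (simp add: less_imp_le)
    show "(\<lambda>n. 1 / real (Suc (r n))) \<longlonglongrightarrow> 0"
      using LIMSEQ_subseq_LIMSEQ[OF LIMSEQ_inverse_real_of_nat r]
      by (simp add: o_def inverse_eq_divide)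
  qed
  ultimately have F0: "F \<alpha> \<beta> = 0" by (rule LIMSEQ_unique)
  have nn: "\<forall>i\<in>K. 0 \<le> \<alpha> i"
  proof
    fix i assume "i \<in> K"
    show "0 \<le> \<alpha> i" by (rule LIMSEQ_le_const[OF cA[OF \<open>i \<in> K\<close>]]) (use A'nn \<open>i \<in> K\<close> in auto)
  qed
  have "(\<exists>i\<in>K. \<alpha> i \<noteq> 0) \<or> (\<exists>i\<in>S. \<beta> i \<noteq> 0)"
  proof (rule ccontr)
    assume "\<not> ?thesis" hence "N \<alpha> \<beta> = 0" unfolding N_def by simp
    with Nl show False by simp
  qed
  with nn F0 np show False unfolding pos_lin_dep_def F_def by blast
qed

lemma carath:
  fixes a :: "nat \<Rightarrow> 'v::real_vector"
  assumes "finite K" "finite S" "K \<inter> S = {}" "\<not> lin_dep_fam S a" "\<forall>i\<in>K. 0 \<le> \<alpha> i"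
  shows "\<exists>K'\<subseteq>K. \<exists>\<alpha>' \<beta>'. (\<forall>i\<in>K'. 0 \<le> \<alpha>' i) \<and>
     (\<Sum>i\<in>K. \<alpha> i *\<^sub>R a i) + (\<Sum>i\<in>S. \<beta> i *\<^sub>R a i) = (\<Sum>i\<in>K'. \<alpha>' i *\<^sub>R a i) + (\<Sum>i\<in>S. \<beta>' i *\<^sub>R a i)
     \<and> \<not> lin_dep_fam (K' \<union> S) a"
  using assms
proof (induct "card K" arbitrary: K \<alpha> \<beta> rule: less_induct)
  case less
  note fK = less.prems(1) and fS = less.prems(2) and disj = less.prems(3) and indS = less.prems(4)
    and nn = less.prems(5)
  show ?case
  proof (cases "lin_dep_fam (K \<union> S) a")
    case False thus ?thesis using nn by blast
  next
    case True
    then obtain c where cnz: "\<exists>i\<in>K \<union> S. c i \<noteq> 0" and c0: "(\<Sum>i\<in>K \<union> S. c i *\<^sub>R a i) = 0"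
      unfolding lin_dep_fam_def by blast
    have split: "(\<Sum>i\<in>K \<union> S. c i *\<^sub>R a i) = (\<Sum>i\<in>K. c i *\<^sub>R a i) + (\<Sum>i\<in>S. c i *\<^sub>R a i)"
      by (rule sum.union_disjoint) (use fK fS disj in auto)
    have "\<exists>i\<in>K. c i \<noteq> 0"
    proof (rule ccontr)
      assume "\<not> ?thesis"
      hence "(\<Sum>i\<in>K. c i *\<^sub>R a i) = 0" by simp
      with c0 split have "(\<Sum>i\<in>S. c i *\<^sub>R a i) = 0" by simp
      moreover from cnz \<open>\<not> (\<exists>i\<in>K. c i \<noteq> 0)\<close> have "\<exists>i\<in>S. c i \<noteq> 0" by blast
      ultimately show False using indS unfolding lin_dep_fam_def by blast
    qed
    then obtain d where dpos: "\<exists>i\<in>K. d i > 0" and d0: "(\<Sum>i\<in>K. d i *\<^sub>R a i) + (\<Sum>i\<in>S. d i *\<^sub>R a i) = 0"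
    proof -
      assume H: "\<And>d. \<exists>i\<in>K. d i > 0 \<Longrightarrow> (\<Sum>i\<in>K. d i *\<^sub>R a i) + (\<Sum>i\<in>S. d i *\<^sub>R a i) = 0 \<Longrightarrow> thesis"
      from \<open>\<exists>i\<in>K. c i \<noteq> 0\<close> obtain i where i: "i \<in> K" "c i \<noteq> 0" by blast
      show thesis
      proof (cases "c i > 0")
        case True thus thesis using H[of c] i c0 split by auto
      next
        case False
        hence "(- c) i > 0" using i by simp
        moreover have "(\<Sum>i\<in>K. (- c) i *\<^sub>R a i) + (\<Sum>i\<in>S. (- c) i *\<^sub>R a i) = 0"
        proof -
          have "(\<Sum>i\<in>K. (- c) i *\<^sub>R a i) + (\<Sum>i\<in>S. (- c) i *\<^sub>R a i) = - ((\<Sum>i\<in>K. c i *\<^sub>R a i) + (\<Sum>i\<in>S. c i *\<^sub>R a i))"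
            by (simp add: sum_negf)
          moreover have "(\<Sum>i\<in>K. c i *\<^sub>R a i) + (\<Sum>i\<in>S. c i *\<^sub>R a i) = 0" using c0 split by simp
          ultimately show ?thesis by (metis add.inverse_neutral)
        qed
        ultimately show thesis using H[of "- c"] i by blast
      qed
    qed
    define P where "P = {i\<in>K. d i > 0}"
    have fP: "finite P" "P \<noteq> {}" using fK dpos unfolding P_def by auto
    define \<tau> where "\<tau> = Min ((\<lambda>i. \<alpha> i / d i) ` P)"
    obtain i0 where i0: "i0 \<in> P" "\<tau> = \<alpha> i0 / d i0"
  proof -
      have "\<tau> \<in> (\<lambda>i. \<alpha> i / d i) ` P" unfolding \<tau>_def using fP by (intro Min_in) auto
      thus ?thesis using that by blast
    qed
    have tle: "\<tau> \<le> \<alpha> i / d i" if "i \<in> P" for i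
      unfolding \<tau>_def using fP that by auto
    have tnn: "\<tau> \<ge> 0" using i0 nn unfolding P_def by auto
    define \<alpha>2 where "\<alpha>2 i = \<alpha> i - \<tau> * d i" for i
    define \<beta>2 where "\<beta>2 i = \<beta> i - \<tau> * d i" for i
    have nn2: "\<forall>i\<in>K. 0 \<le> \<alpha>2 i"
    proof
      fix i assume iK: "i \<in> K"
      show "0 \<le> \<alpha>2 i"
      proof (cases "d i > 0")
        case True
        hence "i \<in> P" using iK unfolding P_def by auto
        from tle[OF this] True have "\<tau> * d i \<le> \<alpha> i" by (simp add: le_divide_eq)
        thus ?thesis unfolding \<alpha>2_def by simp
      next
        case False
        hence "\<tau> * d i \<le> 0" using tnn by (simp add: mult_nonneg_nonpos)
        moreover have "0 \<le> \<alpha> i" using nn iK by blast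
        ultimately show ?thesis unfolding \<alpha>2_def by linarith
      qed
    qed
    have a20: "\<alpha>2 i0 = 0" unfolding \<alpha>2_def using i0 unfolding P_def by auto
    have i0K: "i0 \<in> K" using i0 unfolding P_def by auto
    have eq1: "(\<Sum>i\<in>K. \<alpha> i *\<^sub>R a i) + (\<Sum>i\<in>S. \<beta> i *\<^sub>R a i) = (\<Sum>i\<in>K. \<alpha>2 i *\<^sub>R a i) + (\<Sum>i\<in>S. \<beta>2 i *\<^sub>R a i)"
    proof -
      have "(\<Sum>i\<in>K. \<alpha>2 i *\<^sub>R a i) + (\<Sum>i\<in>S. \<beta>2 i *\<^sub>R a i)
         = ((\<Sum>i\<in>K. \<alpha> i *\<^sub>R a i) + (\<Sum>i\<in>S. \<beta> i *\<^sub>R a i)) - \<tau> *\<^sub>R ((\<Sum>i\<in>K. d i *\<^sub>R a i) + (\<Sum>i\<in>S. d i *\<^sub>R a i))"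
        unfolding \<alpha>2_def \<beta>2_def by (simp add: scaleR_diff_left sum_subtractf scaleR_right.sum algebra_simps)
      thus ?thesis using d0 by simp
    qed
    have eq2: "(\<Sum>i\<in>K. \<alpha>2 i *\<^sub>R a i) = (\<Sum>i\<in>K - {i0}. \<alpha>2 i *\<^sub>R a i)"
      using sum.remove[OF fK i0K, of "\<lambda>i. \<alpha>2 i *\<^sub>R a i"] a20 by simp
    have "card (K - {i0}) < card K" using fK i0K by (meson card_Diff1_less)
    from less.hyps[OF this, of \<alpha>2 \<beta>2] fK fS disj indS nn2
    have "\<exists>K'\<subseteq>K - {i0}. \<exists>\<alpha>' \<beta>'. (\<forall>i\<in>K'. 0 \<le> \<alpha>' i) \<and>
     (\<Sum>i\<in>K - {i0}. \<alpha>2 i *\<^sub>R a i) + (\<Sum>i\<in>S. \<beta>2 i *\<^sub>R a i) = (\<Sum>i\<in>K'. \<alpha>' i *\<^sub>R a i) + (\<Sum>i\<in>S. \<beta>' i *\<^sub>R a i)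
     \<and> \<not> lin_dep_fam (K' \<union> S) a" by auto
    then obtain K' \<alpha>' \<beta>' where K': "K' \<subseteq> K - {i0}" "\<forall>i\<in>K'. 0 \<le> \<alpha>' i"
      "(\<Sum>i\<in>K - {i0}. \<alpha>2 i *\<^sub>R a i) + (\<Sum>i\<in>S. \<beta>2 i *\<^sub>R a i) = (\<Sum>i\<in>K'. \<alpha>' i *\<^sub>R a i) + (\<Sum>i\<in>S. \<beta>' i *\<^sub>R a i)"
      "\<not> lin_dep_fam (K' \<union> S) a"
      by blast
    show ?thesis
      by (rule exI[of _ K']) (use K' eq1 eq2 in auto)
  qed
qed

lemma indep_fam_facts:
  fixes a :: "nat \<Rightarrow> 'v::euclidean_space"
  assumes fS: "finite S" and ni: "\<not> lin_dep_fam S a"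
  shows "inj_on a S" "independent (a ` S)" "dim (a ` S) = card S"
proof -
  show inj: "inj_on a S"
  proof (rule inj_onI, rule ccontr)
    fix i j assume ij: "i \<in> S" "j \<in> S" "a i = a j" "i \<noteq> j"
    define c where "c k = (if k = i then 1 else 0) - (if k = j then 1 else (0::real))" for k
    have "(\<Sum>k\<in>S. c k *\<^sub>R a k) = (\<Sum>k\<in>S. (if k = i then a k else 0)) - (\<Sum>k\<in>S. (if k = j then a k else 0))"
    proof -
      have "(\<Sum>k\<in>S. c k *\<^sub>R a k) = (\<Sum>k\<in>S. (if k = i then a k else 0) - (if k = j then a k else 0))"
        by (rule sum.cong) (auto simp: c_def ij(4))
      also have "\<dots> = (\<Sum>k\<in>S. (if k = i then a k else 0)) - (\<Sum>k\<in>S. (if k = j then a k else 0))"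
        by (rule sum_subtractf)
      finally show ?thesis .
    qed
    also have "\<dots> = 0" using ij fS by (simp add: sum.delta')
    finally have "(\<Sum>k\<in>S. c k *\<^sub>R a k) = 0" .
    moreover have "c i \<noteq> 0" unfolding c_def using ij by simp
    ultimately show False using ni ij unfolding lin_dep_fam_def by blast
  qed
  show ind: "independent (a ` S)"
  proof
    assume "dependent (a ` S)"
    then obtain u where u: "\<exists>v\<in>a ` S. u v \<noteq> 0" "(\<Sum>v\<in>a ` S. u v *\<^sub>R v) = 0"
      using dependent_finite[of "a ` S"] fS by auto
    have "(\<Sum>s\<in>S. u (a s) *\<^sub>R a s) = 0" using u(2) sum.reindex[OF inj, of "\<lambda>v. u v *\<^sub>R v"] by simp
    moreover from u(1) obtain s where "s \<in> S" "u (a s) \<noteq> 0" by blast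
    ultimately have "lin_dep_fam S a" unfolding lin_dep_fam_def by (intro exI[of _ "\<lambda>s. u (a s)"]) auto
    thus False using ni by blast
  qed
  show "dim (a ` S) = card S"
    using dim_eq_card_independent[OF ind] card_image[OF inj] by simp
qed

lemma span_conv:
  fixes a :: "nat \<Rightarrow> 'v::euclidean_space"
  assumes fJ: "finite J" and SJ: "S \<subseteq> J" and ni: "\<not> lin_dep_fam S a" and dm: "dim (a ` J) = card S"
  shows "\<exists>\<beta>. (\<Sum>j\<in>J. \<mu> j *\<^sub>R a j) = (\<Sum>s\<in>S. \<beta> s *\<^sub>R a s)"
proof -
  have fS: "finite S" using fJ SJ finite_subset by blast
  note F = indep_fam_facts[OF fS ni]
  have "span (a ` S) = span (a ` J)"
  proof (rule subspace_dim_equal)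
    show "span (a ` S) \<subseteq> span (a ` J)" using SJ by (intro span_mono) auto
    show "dim (span (a ` J)) \<le> dim (span (a ` S))" using F dm by simp
  qed (auto intro: subspace_span)
  moreover have "(\<Sum>j\<in>J. \<mu> j *\<^sub>R a j) \<in> span (a ` J)"
    by (intro span_sum span_scale span_base) auto
  ultimately have "(\<Sum>j\<in>J. \<mu> j *\<^sub>R a j) \<in> span (a ` S)" by simp
  then obtain u where u: "(\<Sum>v\<in>a ` S. u v *\<^sub>R v) = (\<Sum>j\<in>J. \<mu> j *\<^sub>R a j)"
    using span_finite[of "a ` S"] fS by auto
  have "(\<Sum>v\<in>a ` S. u v *\<^sub>R v) = (\<Sum>s\<in>S. u (a s) *\<^sub>R a s)"
    using sum.reindex[OF F(1), of "\<lambda>v. u v *\<^sub>R v"] by simp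
  with u show ?thesis by metis
qed

lemma C1_lip:
  fixes g :: "'a::euclidean_space \<Rightarrow> real"
  assumes "C1_fun g"
  shows "\<exists>L\<ge>0. \<forall>p\<in>cball c R. \<forall>q\<in>cball c R. \<bar>g p - g q\<bar> \<le> L * dist p q"
proof -
  obtain g' where d: "\<And>z. (g has_derivative blinfun_apply (g' z)) (at z)" and cg: "continuous_on UNIV g'"
    using C1_D[OF assms] by blast
  have "compact (g' ` cball c R)"
    by (rule compact_continuous_image) (use cg continuous_on_subset in auto)
  then obtain B where B: "B > 0" "\<forall>x\<in>g' ` cball c R. norm x \<le> B"
    using compact_imp_bounded bounded_pos by metis
  have "\<bar>g p - g q\<bar> \<le> B * dist p q" if "p \<in> cball c R" "q \<in> cball c R" for p q
  proof -
    have "norm (g p - g q) \<le> B * norm (p - q)"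
    proof (rule differentiable_bound[OF convex_cball])
      show "(g has_derivative blinfun_apply (g' x)) (at x within cball c R)" for x
        using d has_derivative_at_withinI by blast
      show "onorm (blinfun_apply (g' x)) \<le> B" if "x \<in> cball c R" for x
        using B that by (simp add: norm_blinfun.rep_eq[symmetric])
    qed (use that in auto)
    thus ?thesis by (simp add: dist_norm)
  qed
  thus ?thesis using B(1) by (intro exI[of _ B]) auto
qed

lemma taylor_y:
  fixes g :: "(real^'n) \<times> (real^'m) \<Rightarrow> real"
  assumes d: "\<And>z. (g has_derivative blinfun_apply (g' z)) (at z)"
    and om: "\<forall>w\<in>closed_segment w1 w2. norm (grad_y g x w - grad_y g x w2) \<le> \<omega>"
  shows "\<bar>g (x,w1) - g (x,w2) - grad_y g x w2 \<bullet> (w1 - w2)\<bar> \<le> \<omega> * norm (w1 - w2)"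
proof -
  let ?f = "\<lambda>w. g (x,w) - grad_y g x w2 \<bullet> w"
  have "norm (?f w1 - ?f w2) \<le> \<omega> * norm (w1 - w2)"
  proof (rule differentiable_bound[OF convex_closed_segment])
    show "(?f has_derivative (\<lambda>v. grad_y g x w \<bullet> v - grad_y g x w2 \<bullet> v)) (at w within closed_segment w1 w2)" for w
    proof (rule has_derivative_diff)
      show "((\<lambda>w. g (x,w)) has_derivative (\<lambda>v. grad_y g x w \<bullet> v)) (at w within closed_segment w1 w2)"
        by (rule partial_y_deriv[OF d])
      show "((\<lambda>w. grad_y g x w2 \<bullet> w) has_derivative (\<lambda>v. grad_y g x w2 \<bullet> v)) (at w within closed_segment w1 w2)"
        by (rule bounded_linear.has_derivative[OF bounded_linear_inner_right has_derivative_ident])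
    qed
    show "onorm (\<lambda>v. grad_y g x w \<bullet> v - grad_y g x w2 \<bullet> v) \<le> \<omega>" if "w \<in> closed_segment w1 w2" for w
    proof (rule onorm_le)
      fix v
      have "norm (grad_y g x w \<bullet> v - grad_y g x w2 \<bullet> v) = \<bar>(grad_y g x w - grad_y g x w2) \<bullet> v\<bar>"
        by (simp add: inner_diff_left)
      also have "\<dots> \<le> norm (grad_y g x w - grad_y g x w2) * norm v" by (rule Cauchy_Schwarz_ineq2)
      also have "\<dots> \<le> \<omega> * norm v" using om that by (simp add: mult_right_mono)
      finally show "norm (grad_y g x w \<bullet> v - grad_y g x w2 \<bullet> v) \<le> \<omega> * norm v" .
    qed
  qed auto
  thus ?thesis by (simp add: inner_diff_right)
qed

definition mp :: "real \<Rightarrow> real" where "mp u = (max u 0)^2"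

lemma mp_deriv: "(mp has_real_derivative 2 * max u 0) (at u)"
proof (cases "u = 0")
  case True
  have "((\<lambda>y. (mp y - mp 0) / (y - 0)) \<longlongrightarrow> 0) (at 0)"
  proof (rule Lim_null_comparison)
    show "\<forall>\<^sub>F y in at 0. norm ((mp y - mp 0) / (y - 0)) \<le> \<bar>y\<bar>"
    proof (intro always_eventually allI)
      fix y :: real
      show "norm ((mp y - mp 0) / (y - 0)) \<le> \<bar>y\<bar>"
        by (cases "y > 0") (auto simp: mp_def power2_eq_square abs_mult)
    qed
    show "((\<lambda>y::real. \<bar>y\<bar>) \<longlongrightarrow> 0) (at 0)"
      using tendsto_rabs_zero[OF tendsto_ident_at[of 0 UNIV]] by simp
  qed
  thus ?thesis using True by (simp add: has_field_derivative_iff)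
next
  case False
  show ?thesis
  proof (cases "u > 0")
    case True
    have "((\<lambda>y. y^2) has_real_derivative 2 * u) (at u)"
      by (auto intro!: derivative_eq_intros)
    from has_field_derivative_transform_within_open[OF this, of "{0<..}" mp]
    show ?thesis using True by (simp add: mp_def)
  next
    case False
    hence u: "u < 0" using \<open>u \<noteq> 0\<close> by simp
    have "((\<lambda>y. 0) has_real_derivative 0) (at u)"
      by (auto intro!: derivative_eq_intros)
    from has_field_derivative_transform_within_open[OF this, of "{..<0}" mp]
    show ?thesis using u by (simp add: mp_def)
  qed
qed

lemma mp_nonneg: "mp u \<ge> 0" by (simp add: mp_def)
lemma mp_zero_iff: "mp u = 0 \<longleftrightarrow> u \<le> 0" by (simp add: mp_def max_def)
lemma mp_cont: "continuous_on UNIV mp"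
  unfolding mp_def by (intro continuous_intros)

lemma penalty_abstract:
  fixes V :: "'a::euclidean_space \<Rightarrow> real"
  assumes Vc: "continuous_on UNIV V" and Vnn: "\<And>w. V w \<ge> 0"
    and z: "V z = 0" and proj: "\<And>w. V w = 0 \<Longrightarrow> dist y' z \<le> dist y' w" and eta: "\<eta> > 0"
  shows "\<exists>\<rho>>0. \<exists>wh. dist wh z \<le> \<eta> \<and>
     (\<forall>w. (wh-y') \<bullet> (wh-y') + (wh-z) \<bullet> (wh-z) + \<rho> * V wh \<le> (w-y') \<bullet> (w-y') + (w-z) \<bullet> (w-z) + \<rho> * V w)"
proof (rule ccontr)
  define Q where "Q \<rho> w = (w-y') \<bullet> (w-y') + (w-z) \<bullet> (w-z) + \<rho> * V w" for \<rho> w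
  define d where "d = dist y' z"
  have Qz: "Q \<rho> z = d^2" for \<rho> unfolding Q_def d_def using z by (simp add: dist_norm power2_norm_eq_inner[symmetric] norm_minus_commute)
  have Qge: "Q \<rho> w \<ge> (norm (w - z))^2" if "\<rho> \<ge> 0" for \<rho> w
    unfolding Q_def using that Vnn[of w] by (simp add: power2_norm_eq_inner)
  have exmin: "\<exists>wh\<in>cball z d. \<forall>w. Q \<rho> wh \<le> Q \<rho> w" if "\<rho> \<ge> 0" for \<rho>
  proof -
    have "continuous_on (cball z d) (Q \<rho>)"
      unfolding Q_def by (intro continuous_intros continuous_on_subset[OF Vc]) auto
    then obtain wh where wh: "wh \<in> cball z d" "\<forall>w\<in>cball z d. Q \<rho> wh \<le> Q \<rho> w"
      using continuous_attains_inf[of "cball z d" "Q \<rho>"] d_def by auto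
    have "Q \<rho> wh \<le> Q \<rho> w" for w
    proof (cases "w \<in> cball z d")
      case True thus ?thesis using wh by auto
    next
      case False
      hence "d < norm (w - z)" by (simp add: dist_norm norm_minus_commute)
      hence "d^2 < (norm (w - z))^2" using d_def by (intro power_strict_mono) auto
      also have "\<dots> \<le> Q \<rho> w" using Qge[OF that] .
      finally show ?thesis using wh(2)[rule_format, of z] Qz[of \<rho>] d_def by auto
    qed
    with wh show ?thesis by blast
  qed
  assume "\<not> ?thesis"
  hence far: "dist wh z > \<eta>" if "\<forall>w. Q (Suc n) wh \<le> Q (Suc n) w" for n wh
    using that unfolding Q_def by (metis not_le of_nat_0_less_iff zero_less_Suc)
  from exmin have "\<forall>n. \<exists>wh\<in>cball z d. \<forall>w. Q (Suc n) wh \<le> Q (Suc n) w" by simp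
  then obtain W where W: "\<And>n. W n \<in> cball z d" "\<And>n w. Q (Suc n) (W n) \<le> Q (Suc n) w" by metis
  obtain l r where l: "l \<in> cball z d" and r: "strict_mono r" and lim: "(W \<circ> r) \<longlonglongrightarrow> l"
    using compact_imp_seq_compact[OF compact_cball] W(1) unfolding seq_compact_def by metis
  have QW: "Q (Suc n) (W n) \<le> d^2" for n using W(2)[of n z] Qz by simp
  have Vb: "V (W n) \<le> d^2 / Suc n" for n
  proof -
    have "Suc n * V (W n) \<le> d^2" using QW[of n] unfolding Q_def
      by (smt (verit) inner_ge_zero)
    thus ?thesis by (simp add: field_simps)
  qed
  have "(\<lambda>n. V (W (r n))) \<longlonglongrightarrow> V l"
    using continuous_on_tendsto_compose[OF Vc lim] by (simp add: o_def)
  moreover have "(\<lambda>n. V (W (r n))) \<longlonglongrightarrow> 0"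
  proof (rule Lim_null_comparison)
    show "\<forall>\<^sub>F n in sequentially. norm (V (W (r n))) \<le> d^2 * inverse (Suc (r n))"
      using Vb Vnn by (intro always_eventually allI) (simp add: divide_inverse)
    have "(\<lambda>n. inverse (real (Suc (r n)))) \<longlonglongrightarrow> 0"
      using LIMSEQ_subseq_LIMSEQ[OF LIMSEQ_inverse_real_of_nat r] by (simp add: o_def)
    from tendsto_mult_right_zero[OF this, of "d^2"]
    show "(\<lambda>n. d^2 * inverse (real (Suc (r n)))) \<longlonglongrightarrow> 0" .
  qed
  ultimately have Vl: "V l = 0" by (rule LIMSEQ_unique)
  have "(\<lambda>n. (W (r n) - y') \<bullet> (W (r n) - y') + (W (r n) - z) \<bullet> (W (r n) - z)) \<longlonglongrightarrow> (l - y') \<bullet> (l - y') + (l - z) \<bullet> (l - z)"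
    using lim unfolding o_def by (intro tendsto_intros)
  moreover have "(W (r n) - y') \<bullet> (W (r n) - y') + (W (r n) - z) \<bullet> (W (r n) - z) \<le> d^2" for n
    using QW[of "r n"] Vnn[of "W (r n)"] unfolding Q_def by (smt (verit) of_nat_0_le_iff mult_nonneg_nonneg)
  ultimately have le: "(l - y') \<bullet> (l - y') + (l - z) \<bullet> (l - z) \<le> d^2"
    by (intro LIMSEQ_le_const2) auto
  have "d \<le> dist y' l" using proj[OF Vl] d_def by simp
  hence "d^2 \<le> (l - y') \<bullet> (l - y')" using d_def
    by (simp add: dist_norm power2_norm_eq_inner[symmetric] norm_minus_commute power_mono)
  with le have "(l - z) \<bullet> (l - z) \<le> 0" by simp
  hence lz: "l = z" by (metis inner_gt_zero_iff not_le right_minus_eq)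
  have "dist (W (r n)) z > \<eta>" for n using far W(2) by blast
  moreover have "eventually (\<lambda>n. dist (W (r n)) z < \<eta>) sequentially"
    using lim lz eta unfolding o_def tendsto_iff by blast
  ultimately show False unfolding eventually_sequentially by (meson le_refl less_asym)
qed

lemma dist_Pair_le: "dist (a, b) (c, d) \<le> dist a c + dist b d"
  by (simp add: dist_Pair_Pair sqrt_sum_squares_le_sum)

lemma dist_Pair_same: "dist (a, b) (c, b) = dist a c"
  by (simp add: dist_Pair_Pair)

lemma dist_Pair_same2: "dist (a, b) (a, d) = dist b d"
  by (simp add: dist_Pair_Pair)

lemma IJ_facts:
  assumes "l \<le> p"
  shows "idxI l \<union> idxJ l p = {1..p}" "idxI l \<inter> idxJ l p = {}" "finite (idxI l)" "finite (idxJ l p)"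
    "idxI l \<subseteq> {1..p}" "idxJ l p \<subseteq> {1..p}"
  using assms unfolding idxI_def idxJ_def by auto

lemma choose_derivs:
  assumes "\<forall>i\<in>{1..p}. C1_fun (h i)"
  obtains G' where "\<And>i z. i \<in> {1..p} \<Longrightarrow> (h i has_derivative blinfun_apply (G' i z)) (at z)"
    "\<And>i. i \<in> {1..p} \<Longrightarrow> continuous_on UNIV (G' i)"
proof -
  have "\<forall>i\<in>{1..p}. \<exists>g'. (\<forall>z. (h i has_derivative blinfun_apply (g' z)) (at z)) \<and> continuous_on UNIV g'"
    using assms unfolding C1_fun_def by blast
  then obtain G' where "\<forall>i\<in>{1..p}. (\<forall>z. (h i has_derivative blinfun_apply (G' i z)) (at z)) \<and> continuous_on UNIV (G' i)"
    by metis
  thus ?thesis using that by blast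
qed

lemma h_cont_y:
  assumes "C1_fun g"
  shows "continuous_on S (\<lambda>w. g (x, w))"
proof -
  have "continuous_on S (\<lambda>w. (x, w))" by (intro continuous_intros)
  thus ?thesis using continuous_on_compose2[OF C1_cont[OF assms]] by auto
qed

lemma closed_feas:
  assumes "l \<le> p" "\<forall>i\<in>{1..p}. C1_fun (h i)"
  shows "closed (feas h l p x)"
proof -
  have eq: "feas h l p x = (\<Inter>i\<in>idxI l. {y. h i (x,y) \<le> 0}) \<inter> (\<Inter>i\<in>idxJ l p. {y. h i (x,y) = 0})"
    unfolding feas_def by auto
  have c: "continuous_on UNIV (\<lambda>w. h i (x, w))" if "i \<in> {1..p}" for i
    using h_cont_y assms(2) that by blast
  show ?thesis unfolding eq
    using IJ_facts[OF assms(1)] c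
    by (intro closed_Int closed_INT ballI closed_Collect_le closed_Collect_eq) (auto intro: continuous_intros)
qed

definition Vf :: "(nat \<Rightarrow> (real^'n) \<times> (real^'m) \<Rightarrow> real) \<Rightarrow> nat \<Rightarrow> nat \<Rightarrow> real^'n \<Rightarrow> real^'m \<Rightarrow> real" where
  "Vf h l p x w = (\<Sum>i\<in>idxI l. mp (h i (x,w))) + (\<Sum>j\<in>idxJ l p. (h j (x,w))^2)"

lemma Vf_nonneg: "Vf h l p x w \<ge> 0"
  unfolding Vf_def by (intro add_nonneg_nonneg sum_nonneg) (auto simp: mp_nonneg)

lemma Vf_zero_iff:
  assumes "l \<le> p"
  shows "Vf h l p x w = 0 \<longleftrightarrow> w \<in> feas h l p x"
proof -
  note F = IJ_facts[OF assms]
  have "Vf h l p x w = 0 \<longleftrightarrow> (\<forall>i\<in>idxI l. mp (h i (x,w)) = 0) \<and> (\<forall>j\<in>idxJ l p. (h j (x,w))^2 = 0)"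
    unfolding Vf_def using F
    by (simp add: add_nonneg_eq_0_iff sum_nonneg mp_nonneg sum_nonneg_eq_0_iff)
  thus ?thesis unfolding feas_def by (simp add: mp_zero_iff)
qed

lemma Vf_cont:
  assumes "l \<le> p" "\<forall>i\<in>{1..p}. C1_fun (h i)"
  shows "continuous_on UNIV (Vf h l p x)"
proof -
  note F = IJ_facts[OF assms(1)]
  have c: "continuous_on UNIV (\<lambda>w. h i (x, w))" if "i \<in> {1..p}" for i
    using h_cont_y assms(2) that by blast
  have cI: "continuous_on UNIV (\<lambda>w. mp (h i (x, w)))" if "i \<in> idxI l" for i
    using continuous_on_compose2[OF mp_cont c] that F by auto
  have cJ: "continuous_on UNIV (\<lambda>w. (h i (x, w))^2)" if "i \<in> idxJ l p" for i
  proof -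
    have "i \<in> {1..p}" using that F by auto
    from continuous_on_power[OF c[OF this]] show ?thesis .
  qed
  show ?thesis unfolding Vf_def[abs_def]
    by (intro continuous_on_add continuous_on_sum) (use cI cJ in auto)
qed

lemma Vf_deriv:
  assumes "l \<le> p" and G': "\<And>i z. i \<in> {1..p} \<Longrightarrow> (h i has_derivative blinfun_apply (G' i z)) (at z)"
  shows "(Vf h l p x has_derivative (\<lambda>v. (\<Sum>i\<in>idxI l. 2 * max (h i (x,w)) 0 * (grad_y (h i) x w \<bullet> v))
                + (\<Sum>j\<in>idxJ l p. 2 * h j (x,w) * (grad_y (h j) x w \<bullet> v)))) (at w)"
proof -
  note F = IJ_facts[OF assms(1)]
  have pd: "((\<lambda>w. h i (x,w)) has_derivative (\<lambda>v. grad_y (h i) x w \<bullet> v)) (at w)" if "i \<in> {1..p}" for i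
    using partial_y_deriv[OF G'[OF that]] by blast
  have dI: "((\<lambda>w. mp (h i (x,w))) has_derivative (\<lambda>v. 2 * max (h i (x,w)) 0 * (grad_y (h i) x w \<bullet> v))) (at w)"
    if "i \<in> idxI l" for i
  proof -
    have "(mp has_derivative (*) (2 * max (h i (x,w)) 0)) (at (h i (x,w)))"
      using mp_deriv by (simp add: has_field_derivative_def)
    from has_derivative_compose[OF pd this] that F show ?thesis by auto
  qed
  have dJ: "((\<lambda>w. (h i (x,w))^2) has_derivative (\<lambda>v. 2 * h i (x,w) * (grad_y (h i) x w \<bullet> v))) (at w)"
    if "i \<in> idxJ l p" for i
  proof -
    have i: "i \<in> {1..p}" using that F by auto
    show ?thesis unfolding power2_eq_square
      by (rule has_derivative_eq_rhs[OF has_derivative_mult[OF pd[OF i] pd[OF i]]]) (auto simp: fun_eq_iff algebra_simps)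
  qed
  show ?thesis unfolding Vf_def[abs_def]
    by (intro has_derivative_add has_derivative_sum) (use dI dJ in auto)
qed

lemma sq_deriv: "((\<lambda>w. (w-a) \<bullet> (w-a)) has_derivative (\<lambda>v. 2 * ((w0 - a) \<bullet> v))) (at w0)"
  by (rule has_derivative_eq_rhs[OF has_derivative_inner[OF has_derivative_diff[OF has_derivative_ident has_derivative_const] has_derivative_diff[OF has_derivative_ident has_derivative_const]]])
    (auto simp: fun_eq_iff inner_commute)

lemma stationarity:
  assumes "l \<le> p" and G': "\<And>i z. i \<in> {1..p} \<Longrightarrow> (h i has_derivative blinfun_apply (G' i z)) (at z)"
    and mn: "\<forall>w. (wh-y') \<bullet> (wh-y') + (wh-z) \<bullet> (wh-z) + \<rho> * Vf h l p x wh \<le> (w-y') \<bullet> (w-y') + (w-z) \<bullet> (w-z) + \<rho> * Vf h l p x w"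
  shows "(y' - wh) + (z - wh) = (\<Sum>i\<in>idxI l. (\<rho> * max (h i (x,wh)) 0) *\<^sub>R grad_y (h i) x wh)
             + (\<Sum>j\<in>idxJ l p. (\<rho> * h j (x,wh)) *\<^sub>R grad_y (h j) x wh)"
proof -
  define M where "M = (\<Sum>i\<in>idxI l. max (h i (x,wh)) 0 *\<^sub>R grad_y (h i) x wh) + (\<Sum>j\<in>idxJ l p. h j (x,wh) *\<^sub>R grad_y (h j) x wh)"
  define E where "E = (wh - y') + (wh - z) + \<rho> *\<^sub>R M"
  have Mv: "M \<bullet> v = (\<Sum>i\<in>idxI l. max (h i (x,wh)) 0 * (grad_y (h i) x wh \<bullet> v)) + (\<Sum>j\<in>idxJ l p. h j (x,wh) * (grad_y (h j) x wh \<bullet> v))" for v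
    unfolding M_def by (simp add: inner_add_left inner_sum_left)
  have D: "((\<lambda>w. (w-y') \<bullet> (w-y') + (w-z) \<bullet> (w-z) + \<rho> * Vf h l p x w) has_derivative (\<lambda>v. 2 * (E \<bullet> v))) (at wh)"
  proof -
    have "((\<lambda>w. (w-y') \<bullet> (w-y') + (w-z) \<bullet> (w-z) + \<rho> * Vf h l p x w) has_derivative
      (\<lambda>v. 2 * ((wh - y') \<bullet> v) + 2 * ((wh - z) \<bullet> v) + \<rho> * ((\<Sum>i\<in>idxI l. 2 * max (h i (x,wh)) 0 * (grad_y (h i) x wh \<bullet> v))
                + (\<Sum>j\<in>idxJ l p. 2 * h j (x,wh) * (grad_y (h j) x wh \<bullet> v))))) (at wh)"
      by (intro has_derivative_add has_derivative_mult_right Vf_deriv[OF assms(1) G'] sq_deriv) auto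
    moreover have "(\<lambda>v. 2 * ((wh - y') \<bullet> v) + 2 * ((wh - z) \<bullet> v) + \<rho> * ((\<Sum>i\<in>idxI l. 2 * max (h i (x,wh)) 0 * (grad_y (h i) x wh \<bullet> v))
                + (\<Sum>j\<in>idxJ l p. 2 * h j (x,wh) * (grad_y (h j) x wh \<bullet> v)))) = (\<lambda>v. 2 * (E \<bullet> v))"
    proof
      fix v
      have s1: "(\<Sum>i\<in>idxI l. 2 * max (h i (x,wh)) 0 * (grad_y (h i) x wh \<bullet> v)) = 2 * (\<Sum>i\<in>idxI l. max (h i (x,wh)) 0 * (grad_y (h i) x wh \<bullet> v))"
        by (simp add: sum_distrib_left mult.assoc)
      have s2: "(\<Sum>j\<in>idxJ l p. 2 * h j (x,wh) * (grad_y (h j) x wh \<bullet> v)) = 2 * (\<Sum>j\<in>idxJ l p. h j (x,wh) * (grad_y (h j) x wh \<bullet> v))"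
        by (simp add: sum_distrib_left mult.assoc)
      have e1: "E \<bullet> v = (wh-y') \<bullet> v + (wh-z) \<bullet> v + \<rho> * (M \<bullet> v)" unfolding E_def by (simp only: inner_add_left inner_scaleR_left)
      show "2 * ((wh - y') \<bullet> v) + 2 * ((wh - z) \<bullet> v) + \<rho> * ((\<Sum>i\<in>idxI l. 2 * max (h i (x,wh)) 0 * (grad_y (h i) x wh \<bullet> v))
                + (\<Sum>j\<in>idxJ l p. 2 * h j (x,wh) * (grad_y (h j) x wh \<bullet> v))) = 2 * (E \<bullet> v)"
        unfolding e1 Mv s1 s2 by (simp only: distrib_left mult.commute mult.left_commute add.assoc)
    qed
    ultimately show ?thesis by simp
  qed
  have "(\<lambda>v. 2 * (E \<bullet> v)) = (\<lambda>v. 0)"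
    by (rule differential_zero_maxmin[OF _ open_UNIV D]) (use mn in auto)
  hence "2 * (E \<bullet> E) = 0" by metis
  hence E0: "E = 0" by simp
  have "(y' - wh) + (z - wh) = \<rho> *\<^sub>R M" using E0 unfolding E_def by (simp add: algebra_simps eq_neg_iff_add_eq_0)
  also have "\<dots> = (\<Sum>i\<in>idxI l. (\<rho> * max (h i (x,wh)) 0) *\<^sub>R grad_y (h i) x wh)
             + (\<Sum>j\<in>idxJ l p. (\<rho> * h j (x,wh)) *\<^sub>R grad_y (h j) x wh)"
    unfolding M_def by (simp add: scaleR_add_right scaleR_right.sum)
  finally show ?thesis .
qed

lemma final_ineq:
  fixes d e t \<eta> \<omega> M c :: real
  assumes d: "d > 0" and c: "c > 0" and M: "M \<ge> 0" and t: "t \<ge> 0" and eta: "\<eta> \<ge> 0" "\<eta> \<le> 1/10"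
    and Me: "M * \<eta> \<le> c / 24" and om: "\<omega> \<ge> 0" "\<omega> \<le> c / 25"
    and e1: "e \<ge> (1 - \<eta>) * d" and e2: "e \<le> (1 + \<eta>) * d"
    and main: "c * (e^2 - \<eta> * d * e) \<le> (e + \<eta> * d) * (M * t + M * \<eta> * d + \<omega> * e)"
  shows "d \<le> 3 * M * t / c"
proof -
  have ed: "\<eta> * d \<le> d / 10" using mult_right_mono[OF eta(2), of d] d by simp
  have q1: "(1 - \<eta>) * d = d - \<eta> * d" by (simp add: algebra_simps)
  have q2: "(1 + \<eta>) * d = d + \<eta> * d" by (simp add: algebra_simps)
  have e0: "e \<ge> 9/10 * d" using e1 ed q1 by linarith
  have e3: "e \<le> 11/10 * d" using e2 ed q2 by linarith
  have "(9/10 * d)^2 \<le> e^2" using e0 d by (intro power_mono) auto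
  hence A1: "81/100 * d^2 \<le> e^2" by (simp add: power2_eq_square)
  have "\<eta> * d * e \<le> (1/10) * d * (11/10 * d)"
    using eta d e3 e0 by (intro mult_mono) auto
  hence A2: "\<eta> * d * e \<le> 11/100 * d^2" by (simp add: power2_eq_square)
  have LHS: "c * (7/10 * d^2) \<le> c * (e^2 - \<eta> * d * e)"
    using A1 A2 c by (intro mult_left_mono) auto
  have B1: "e + \<eta> * d \<le> 12/10 * d" using e3 ed by linarith
  have "\<omega> * e \<le> (c/25) * (11/10 * d)" using om e3 e0 d by (intro mult_mono) auto
  moreover have "M * \<eta> * d \<le> (c/24) * d" using Me d by (intro mult_right_mono) auto
  moreover have "(c/25) * (11/10 * d) = 11/250 * (c * d)" "(c/24) * d = (c*d)/24" "(c/10) * d = (c * d)/10" by simp_all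
  moreover have "c * d > 0" using c d by simp
  ultimately have B2: "M * t + M * \<eta> * d + \<omega> * e \<le> M * t + (c/10) * d"
    by linarith
  have B3: "0 \<le> M * t + M * \<eta> * d + \<omega> * e" using M t eta d om e0 by (intro add_nonneg_nonneg mult_nonneg_nonneg) auto
  have "(e + \<eta> * d) * (M * t + M * \<eta> * d + \<omega> * e) \<le> (12/10 * d) * (M * t + (c/10) * d)"
    using B1 B2 B3 d by (intro mult_mono) auto
  with main LHS have "c * (7/10 * d^2) \<le> (12/10 * d) * (M * t + (c/10) * d)" by linarith
  hence "d * (c * (7/10 * d)) \<le> d * ((12/10) * (M * t + (c/10) * d))" by (simp add: power2_eq_square algebra_simps)
  hence "c * (7/10 * d) \<le> (12/10) * (M * t + (c/10) * d)" using d by (simp add: mult_le_cancel_left)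
  hence "c * d * (58/100) \<le> (12/10) * M * t" by (simp add: algebra_simps)
  moreover have "M * t \<ge> 0" using M t by simp
  ultimately have "c * d \<le> 3 * M * t" by linarith
  thus ?thesis using c by (simp add: field_simps)
qed

lemma finite_min_pos:
  assumes "finite X" "\<forall>x\<in>X. \<exists>c>0. P x c" "\<And>x c c'. P x c \<Longrightarrow> 0 < c' \<Longrightarrow> c' \<le> c \<Longrightarrow> P x c'"
  shows "\<exists>c>0. \<forall>x\<in>X. P x (c::real)"
  using assms(1,2)
proof (induct X rule: finite_induct)
  case empty thus ?case by (intro exI[of _ 1]) auto
next
  case (insert x X)
  then obtain c1 where c1: "c1 > 0" "\<forall>y\<in>X. P y c1" by auto
  from insert obtain c2 where c2: "c2 > 0" "P x c2" by auto
  have "\<forall>y\<in>insert x X. P y (min c1 c2)"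
    using c1 c2 assms(3) by (auto simp: min_def)
  thus ?case using c1 c2 by (intro exI[of _ "min c1 c2"]) auto
qed

lemma lemA_perturb:
  fixes a b :: "nat \<Rightarrow> 'v::real_normed_vector"
  assumes ab: "\<forall>i\<in>K \<union> S. norm (a i - b i) \<le> \<epsilon>" and fK: "finite K" and fS: "finite S"
    and nn: "\<forall>i\<in>K. 0 \<le> \<alpha> i"
    and cb: "c * ((\<Sum>i\<in>K. \<alpha> i) + (\<Sum>i\<in>S. \<bar>\<beta> i\<bar>)) \<le> norm ((\<Sum>i\<in>K. \<alpha> i *\<^sub>R b i) + (\<Sum>i\<in>S. \<beta> i *\<^sub>R b i))"
  shows "(c - \<epsilon>) * ((\<Sum>i\<in>K. \<alpha> i) + (\<Sum>i\<in>S. \<bar>\<beta> i\<bar>)) \<le> norm ((\<Sum>i\<in>K. \<alpha> i *\<^sub>R a i) + (\<Sum>i\<in>S. \<beta> i *\<^sub>R a i))"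
proof -
  let ?N = "(\<Sum>i\<in>K. \<alpha> i) + (\<Sum>i\<in>S. \<bar>\<beta> i\<bar>)"
  have "((\<Sum>i\<in>K. \<alpha> i *\<^sub>R b i) + (\<Sum>i\<in>S. \<beta> i *\<^sub>R b i)) - ((\<Sum>i\<in>K. \<alpha> i *\<^sub>R a i) + (\<Sum>i\<in>S. \<beta> i *\<^sub>R a i))
     = (\<Sum>i\<in>K. \<alpha> i *\<^sub>R (b i - a i)) + (\<Sum>i\<in>S. \<beta> i *\<^sub>R (b i - a i))"
    by (simp add: scaleR_diff_right sum_subtractf algebra_simps)
  also have "norm \<dots> \<le> (\<Sum>i\<in>K. norm (\<alpha> i *\<^sub>R (b i - a i))) + (\<Sum>i\<in>S. norm (\<beta> i *\<^sub>R (b i - a i)))"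
    by (intro order.trans[OF norm_triangle_ineq] add_mono norm_sum)
  also have "\<dots> \<le> (\<Sum>i\<in>K. \<alpha> i * \<epsilon>) + (\<Sum>i\<in>S. \<bar>\<beta> i\<bar> * \<epsilon>)"
  proof (intro add_mono sum_mono)
    fix i assume "i \<in> K"
    thus "norm (\<alpha> i *\<^sub>R (b i - a i)) \<le> \<alpha> i * \<epsilon>"
      using nn ab by (auto intro!: mult_left_mono simp: norm_minus_commute)
  next
    fix i assume "i \<in> S"
    thus "norm (\<beta> i *\<^sub>R (b i - a i)) \<le> \<bar>\<beta> i\<bar> * \<epsilon>"
      using ab by (auto intro!: mult_left_mono simp: norm_minus_commute)
  qed
  also have "\<dots> = \<epsilon> * ?N" by (simp add: sum_distrib_left sum_distrib_right algebra_simps)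
  finally have "norm (((\<Sum>i\<in>K. \<alpha> i *\<^sub>R b i) + (\<Sum>i\<in>S. \<beta> i *\<^sub>R b i)) - ((\<Sum>i\<in>K. \<alpha> i *\<^sub>R a i) + (\<Sum>i\<in>S. \<beta> i *\<^sub>R a i))) \<le> \<epsilon> * ?N" .
  moreover have "norm ((\<Sum>i\<in>K. \<alpha> i *\<^sub>R b i) + (\<Sum>i\<in>S. \<beta> i *\<^sub>R b i)) \<le> norm ((\<Sum>i\<in>K. \<alpha> i *\<^sub>R a i) + (\<Sum>i\<in>S. \<beta> i *\<^sub>R a i)) + norm (((\<Sum>i\<in>K. \<alpha> i *\<^sub>R b i) + (\<Sum>i\<in>S. \<beta> i *\<^sub>R b i)) - ((\<Sum>i\<in>K. \<alpha> i *\<^sub>R a i) + (\<Sum>i\<in>S. \<beta> i *\<^sub>R a i)))"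
    by (rule norm_triangle_sub)
  ultimately show ?thesis using cb by (simp add: algebra_simps)
qed

lemma sum_bound_inner:
  fixes a :: "nat \<Rightarrow> 'v::real_inner"
  assumes nn: "\<forall>i\<in>K. 0 \<le> \<alpha> i" and bK: "\<forall>i\<in>K. a i \<bullet> u \<le> B" and bS: "\<forall>i\<in>S. \<bar>a i \<bullet> u\<bar> \<le> B"
  shows "((\<Sum>i\<in>K. \<alpha> i *\<^sub>R a i) + (\<Sum>i\<in>S. \<beta> i *\<^sub>R a i)) \<bullet> u \<le> ((\<Sum>i\<in>K. \<alpha> i) + (\<Sum>i\<in>S. \<bar>\<beta> i\<bar>)) * B"
proof -
  have "((\<Sum>i\<in>K. \<alpha> i *\<^sub>R a i) + (\<Sum>i\<in>S. \<beta> i *\<^sub>R a i)) \<bullet> u = (\<Sum>i\<in>K. \<alpha> i * (a i \<bullet> u)) + (\<Sum>i\<in>S. \<beta> i * (a i \<bullet> u))"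
    by (simp add: inner_add_left inner_sum_left)
  also have "\<dots> \<le> (\<Sum>i\<in>K. \<alpha> i * B) + (\<Sum>i\<in>S. \<bar>\<beta> i\<bar> * B)"
  proof (intro add_mono sum_mono)
    fix i assume "i \<in> K" thus "\<alpha> i * (a i \<bullet> u) \<le> \<alpha> i * B" using nn bK by (auto intro: mult_left_mono)
  next
    fix i assume i: "i \<in> S"
    have "\<beta> i * (a i \<bullet> u) \<le> \<bar>\<beta> i\<bar> * \<bar>a i \<bullet> u\<bar>" by (metis abs_ge_self abs_mult)
    also have "\<dots> \<le> \<bar>\<beta> i\<bar> * B" using bS i by (auto intro: mult_left_mono)
    finally show "\<beta> i * (a i \<bullet> u) \<le> \<bar>\<beta> i\<bar> * B" .
  qed
  also have "\<dots> = ((\<Sum>i\<in>K. \<alpha> i) + (\<Sum>i\<in>S. \<bar>\<beta> i\<bar>)) * B" by (simp add: sum_distrib_right distrib_right)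
  finally show ?thesis .
qed

lemma open_vimage_UNIV: "continuous_on UNIV f \<Longrightarrow> open B \<Longrightarrow> open (f -` B)"
  using continuous_on_open_vimage[of UNIV f] by auto

lemma P_local:
  fixes h :: "nat \<Rightarrow> (real^'n) \<times> (real^'m) \<Rightarrow> real"
  assumes lp: "l \<le> p" and C1: "\<forall>i\<in>{1..p}. C1_fun (h i)" and yb: "yb \<in> feas h l p xb"
    and R: "RCPLD h l p xb yb"
  shows "\<exists>\<delta>>0. \<exists>\<kappa>\<ge>0. \<forall>x x' y' w. x \<in> ball xb \<delta> \<longrightarrow> x' \<in> ball xb \<delta> \<longrightarrow> y' \<in> feas h l p x' \<longrightarrow>
           y' \<in> ball yb \<delta> \<longrightarrow> w \<in> feas h l p x \<longrightarrow> dist w y' < \<delta> \<longrightarrow>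
           (\<exists>z\<in>feas h l p x. dist z y' \<le> \<kappa> * dist x x')"
proof -
  note F = IJ_facts[OF lp]
  obtain G' where G': "\<And>i z. i \<in> {1..p} \<Longrightarrow> (h i has_derivative blinfun_apply (G' i z)) (at z)"
    using choose_derivs[OF C1] by metis
  define I where "I = idxI l"
  define J where "J = idxJ l p"
  define a where "a i q = grad_y (h i) (fst q) (snd q)" for i q
  define pb where "pb = (xb, yb)"
  define b where "b i = a i pb" for i
  define A where "A = active_set h l xb yb"
  have ag: "grad_y (h i) x y = a i (x, y)" for i x y unfolding a_def by simp
  obtain U Sb where U: "open U" "pb \<in> U" and SbJ: "Sb \<subseteq> J" and Sbind: "\<not> lin_dep_fam Sb b"
    and spn: "span (b ` Sb) = span (b ` J)"
    and rank: "\<forall>q\<in>U. dim ((\<lambda>i. a i q) ` J) = dim (b ` J)"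
    and iii: "\<forall>K\<subseteq>A. pos_lin_dep K b Sb b \<longrightarrow> (\<forall>q\<in>U. lin_dep_fam (K \<union> Sb) (\<lambda>i. a i q))"
  proof -
    from R obtain U Sb where H: "open U" "(xb, yb) \<in> U" "Sb \<subseteq> idxJ l p"
      "\<not> lin_dep_fam Sb (\<lambda>i. grad_y (h i) xb yb)"
      "span ((\<lambda>i. grad_y (h i) xb yb) ` Sb) = span ((\<lambda>i. grad_y (h i) xb yb) ` idxJ l p)"
      "\<forall>(x, y)\<in>U. dim ((\<lambda>i. grad_y (h i) x y) ` idxJ l p) = dim ((\<lambda>i. grad_y (h i) xb yb) ` idxJ l p)"
      "\<forall>K \<subseteq> active_set h l xb yb.
         pos_lin_dep K (\<lambda>i. grad_y (h i) xb yb) Sb (\<lambda>i. grad_y (h i) xb yb) \<longrightarrow>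
         (\<forall>(x, y)\<in>U. lin_dep_fam (K \<union> Sb) (\<lambda>i. grad_y (h i) x y))"
      unfolding RCPLD_def by blast
    have bq: "(\<lambda>i. grad_y (h i) xb yb) = b" unfolding b_def a_def pb_def by simp
    have aq: "(\<lambda>i. a i q) = (\<lambda>i. grad_y (h i) (fst q) (snd q))" for q unfolding a_def by simp
    show ?thesis
    proof (rule that[of U Sb])
      show "open U" by (rule H(1))
      show "pb \<in> U" using H(2) unfolding pb_def .
      show "Sb \<subseteq> J" using H(3) unfolding J_def .
      show "\<not> lin_dep_fam Sb b" using H(4) unfolding bq .
      show "span (b ` Sb) = span (b ` J)" using H(5) unfolding bq J_def .
      show "\<forall>q\<in>U. dim ((\<lambda>i. a i q) ` J) = dim (b ` J)"
      proof
        fix q assume "q \<in> U"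
        hence "dim ((\<lambda>i. grad_y (h i) (fst q) (snd q)) ` idxJ l p) = dim ((\<lambda>i. grad_y (h i) xb yb) ` idxJ l p)"
          using H(6) by (cases q) auto
        thus "dim ((\<lambda>i. a i q) ` J) = dim (b ` J)" unfolding aq bq J_def .
      qed
      show "\<forall>K\<subseteq>A. pos_lin_dep K b Sb b \<longrightarrow> (\<forall>q\<in>U. lin_dep_fam (K \<union> Sb) (\<lambda>i. a i q))"
      proof (intro allI impI ballI)
        fix K q assume K: "K \<subseteq> A" "pos_lin_dep K b Sb b" and q: "q \<in> U"
        have "\<forall>(x, y)\<in>U. lin_dep_fam (K \<union> Sb) (\<lambda>i. grad_y (h i) x y)"
          using H(7) K unfolding A_def bq by blast
        hence "lin_dep_fam (K \<union> Sb) (\<lambda>i. grad_y (h i) (fst q) (snd q))" using q by (cases q) auto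
        thus "lin_dep_fam (K \<union> Sb) (\<lambda>i. a i q)" unfolding aq .
      qed
    qed
  qed
  have fI: "finite I" and fJ: "finite J" and IJd: "I \<inter> J = {}" and I1p: "I \<subseteq> {1..p}" and J1p: "J \<subseteq> {1..p}"
    using F unfolding I_def J_def by auto
  have fSb: "finite Sb" using fJ SbJ finite_subset by blast
  have AI: "A \<subseteq> I" unfolding A_def active_set_def I_def by auto
  have fA: "finite A" using AI fI finite_subset by blast
  define PK where "PK K c \<longleftrightarrow> (\<forall>\<alpha> \<beta>. (\<forall>i\<in>K. 0 \<le> \<alpha> i) \<longrightarrow>
      c * ((\<Sum>i\<in>K. \<alpha> i) + (\<Sum>i\<in>Sb. \<bar>\<beta> i\<bar>)) \<le> norm ((\<Sum>i\<in>K. \<alpha> i *\<^sub>R b i) + (\<Sum>i\<in>Sb. \<beta> i *\<^sub>R b i)))" for K c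
  have "\<exists>c>0. \<forall>K\<in>{K. K \<subseteq> A \<and> \<not> pos_lin_dep K b Sb b}. PK K c"
  proof (rule finite_min_pos)
    show "finite {K. K \<subseteq> A \<and> \<not> pos_lin_dep K b Sb b}"
      by (rule finite_subset[of _ "Pow A"]) (use fA in auto)
    show "\<forall>K\<in>{K. K \<subseteq> A \<and> \<not> pos_lin_dep K b Sb b}. \<exists>c>0. PK K c"
    proof
      fix K assume K: "K \<in> {K. K \<subseteq> A \<and> \<not> pos_lin_dep K b Sb b}"
      have fK: "finite K" using K fA finite_subset by blast
      have npK: "\<not> pos_lin_dep K b Sb b" using K by blast
      from lemA[OF fK fSb npK] show "\<exists>c>0. PK K c" unfolding PK_def .
    qed
  next
    fix K and c c' :: real
    assume H: "PK K c" and c': "0 < c'" "c' \<le> c"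
    show "PK K c'" unfolding PK_def
    proof (intro allI impI)
      fix \<alpha> \<beta> :: "nat \<Rightarrow> real" assume nn: "\<forall>i\<in>K. 0 \<le> \<alpha> i"
      have "0 \<le> (\<Sum>i\<in>K. \<alpha> i) + (\<Sum>i\<in>Sb. \<bar>\<beta> i\<bar>)" using nn by (intro add_nonneg_nonneg sum_nonneg) auto
      hence "c' * ((\<Sum>i\<in>K. \<alpha> i) + (\<Sum>i\<in>Sb. \<bar>\<beta> i\<bar>)) \<le> c * ((\<Sum>i\<in>K. \<alpha> i) + (\<Sum>i\<in>Sb. \<bar>\<beta> i\<bar>))"
        using c' by (intro mult_right_mono) auto
      moreover have "c * ((\<Sum>i\<in>K. \<alpha> i) + (\<Sum>i\<in>Sb. \<bar>\<beta> i\<bar>)) \<le> norm ((\<Sum>i\<in>K. \<alpha> i *\<^sub>R b i) + (\<Sum>i\<in>Sb. \<beta> i *\<^sub>R b i))"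
        using H nn unfolding PK_def by blast
      ultimately show "c' * ((\<Sum>i\<in>K. \<alpha> i) + (\<Sum>i\<in>Sb. \<bar>\<beta> i\<bar>)) \<le> norm ((\<Sum>i\<in>K. \<alpha> i *\<^sub>R b i) + (\<Sum>i\<in>Sb. \<beta> i *\<^sub>R b i))"
        by linarith
    qed
  qed
  then obtain c where c: "c > 0" and cK0: "\<forall>K\<in>{K. K \<subseteq> A \<and> \<not> pos_lin_dep K b Sb b}. PK K c" by blast
  have cK: "c * ((\<Sum>i\<in>K. \<alpha> i) + (\<Sum>i\<in>Sb. \<bar>\<beta> i\<bar>)) \<le> norm ((\<Sum>i\<in>K. \<alpha> i *\<^sub>R b i) + (\<Sum>i\<in>Sb. \<beta> i *\<^sub>R b i))"
    if "K \<subseteq> A" "\<not> pos_lin_dep K b Sb b" "\<forall>i\<in>K. 0 \<le> \<alpha> i" for K \<alpha> \<beta>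
    using cK0 that unfolding PK_def by blast
  have emp: "\<not> pos_lin_dep {} b Sb b" using Sbind unfolding pos_lin_dep_def lin_dep_fam_def by auto
  define \<epsilon>1 where "\<epsilon>1 = c / 100"
  have "\<forall>i\<in>{1..p}. \<exists>L\<ge>0. \<forall>q\<in>cball pb 1. \<forall>q'\<in>cball pb 1. \<bar>h i q - h i q'\<bar> \<le> L * dist q q'"
    using C1_lip C1 by blast
  then obtain Lf where Lf: "\<forall>i\<in>{1..p}. Lf i \<ge> 0 \<and> (\<forall>q\<in>cball pb 1. \<forall>q'\<in>cball pb 1. \<bar>h i q - h i q'\<bar> \<le> Lf i * dist q q')"
    by metis
  define M where "M = (\<Sum>i\<in>{1..p}. Lf i)"
  have M0: "M \<ge> 0" unfolding M_def using Lf by (intro sum_nonneg) auto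
  have Mlip: "\<bar>h i q - h i q'\<bar> \<le> M * dist q q'" if "i \<in> {1..p}" "q \<in> cball pb 1" "q' \<in> cball pb 1" for i q q'
  proof -
    have "Lf i \<le> M" unfolding M_def using that(1) Lf by (intro member_le_sum) auto
    hence "Lf i * dist q q' \<le> M * dist q q'" by (intro mult_right_mono) auto
    thus ?thesis using Lf that by force
  qed
  have aic: "continuous_on UNIV (a i)" if "i \<in> {1..p}" for i
  proof -
    have "a i = (\<lambda>q. grad_y (h i) (fst q) (snd q))" unfolding a_def by (rule ext) simp
    thus ?thesis using grad_y_cont C1 that by metis
  qed
  have hic: "continuous_on UNIV (h i)" if "i \<in> {1..p}" for i using C1_cont C1 that by blast
  define Onb where "Onb = U \<inter> (\<Inter>i\<in>{1..p}. (a i) -` ball (b i) \<epsilon>1) \<inter> (\<Inter>i\<in>I - A. (h i) -` {..<0})"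
  have "open Onb" unfolding Onb_def using U(1) aic hic I1p fI
    by (intro open_Int open_INT ballI open_vimage_UNIV) auto
  moreover have "pb \<in> Onb"
  proof -
    have "h i pb < 0" if "i \<in> I - A" for i
    proof -
      have "h i pb \<le> 0" using yb that unfolding feas_def I_def pb_def by auto
      moreover have "h i pb \<noteq> 0" using that unfolding A_def active_set_def I_def pb_def by auto
      ultimately show ?thesis by simp
    qed
    thus ?thesis unfolding Onb_def using U(2) c by (auto simp: b_def \<epsilon>1_def)
  qed
  ultimately obtain r0 where r0: "r0 > 0" "ball pb r0 \<subseteq> Onb" using open_contains_ball by blast
  define r where "r = min r0 1"
  have r: "r > 0" "r \<le> 1" "ball pb r \<subseteq> Onb" using r0 unfolding r_def by auto
  have inO: "q \<in> U" "\<And>i. i \<in> {1..p} \<Longrightarrow> dist (a i q) (b i) < \<epsilon>1" "\<And>i. i \<in> I - A \<Longrightarrow> h i q < 0"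
    if "q \<in> ball pb r" for q
    using r(3) that unfolding Onb_def by (auto simp: dist_commute)
  have inC: "q \<in> cball pb 1" if "q \<in> ball pb r" for q using that r(2) by auto
  define \<delta> where "\<delta> = r / 4"
  define \<eta> where "\<eta> = min (1/10) (c / (96 * (M + 1)))"
  define \<kappa> where "\<kappa> = 3 * M / (c / 2)"
  have \<delta>0: "\<delta> > 0" unfolding \<delta>_def using r by simp
  have \<eta>01: "\<eta> > 0" unfolding \<eta>_def using c M0 by simp
  have \<eta>02: "\<eta> \<le> 1/10" unfolding \<eta>_def by (rule min.cobounded1)
  note \<eta>0 = \<eta>01 \<eta>02
  have Meta: "M * \<eta> \<le> (c/2) / 24"
  proof -
    have "M * \<eta> \<le> M * (c / (96 * (M + 1)))" unfolding \<eta>_def using M0 by (intro mult_left_mono) auto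
    also have "\<dots> = (c / 96) * (M / (M + 1))" using M0 by (simp add: field_simps)
    also have "\<dots> \<le> (c / 96) * 1" using M0 c by (intro mult_left_mono) auto
    finally have "M * \<eta> \<le> c / 96" by simp
    thus ?thesis using c by linarith
  qed
  have \<kappa>0: "\<kappa> \<ge> 0" unfolding \<kappa>_def using M0 c by simp
  show ?thesis
  proof (rule exI[of _ \<delta>], rule conjI[OF \<delta>0], rule exI[of _ \<kappa>], rule conjI[OF \<kappa>0], intro allI impI)
    fix x x' y' w
    assume x: "x \<in> ball xb \<delta>" and x': "x' \<in> ball xb \<delta>" and y'F: "y' \<in> feas h l p x'"
      and y'b: "y' \<in> ball yb \<delta>" and wF: "w \<in> feas h l p x" and wd: "dist w y' < \<delta>"
    define Gx where "Gx = feas h l p x"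
    have clG: "closed Gx" using closed_feas[OF lp C1] unfolding Gx_def by blast
    have wG: "w \<in> Gx" using wF unfolding Gx_def .
    obtain z where zG: "z \<in> Gx" and zmin: "\<And>u. u \<in> Gx \<Longrightarrow> dist y' z \<le> dist y' u"
      using distance_attains_inf[OF clG, of y'] wG by blast
    define d where "d = dist y' z"
    define t where "t = dist x x'"
    have t0: "t \<ge> 0" unfolding t_def by simp
    have dlt: "d < \<delta>" using zmin[OF wG] wd unfolding d_def by (simp add: dist_commute)
    show "\<exists>z\<in>feas h l p x. dist z y' \<le> \<kappa> * dist x x'"
    proof (cases "d = 0")
      case True
      hence "dist z y' = 0" unfolding d_def by (simp add: dist_commute)
      thus ?thesis using zG \<kappa>0 unfolding Gx_def by (intro bexI[of _ z]) auto
    next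
      case False
      hence d0: "d > 0" unfolding d_def by simp
      have Vz: "Vf h l p x z = 0" using zG Vf_zero_iff[OF lp] unfolding Gx_def by blast
      have Vproj: "dist y' z \<le> dist y' u" if "Vf h l p x u = 0" for u
        using zmin that Vf_zero_iff[OF lp] unfolding Gx_def by blast
      obtain \<rho> zh where \<rho>: "\<rho> > 0" and zhz: "dist zh z \<le> \<eta> * d"
        and mn: "\<forall>u. (zh-y') \<bullet> (zh-y') + (zh-z) \<bullet> (zh-z) + \<rho> * Vf h l p x zh \<le> (u-y') \<bullet> (u-y') + (u-z) \<bullet> (u-z) + \<rho> * Vf h l p x u"
        using penalty_abstract[OF Vf_cont[OF lp C1] Vf_nonneg Vz Vproj, of "\<eta> * d"] \<eta>01 d0 by auto
      have stat: "(y' - zh) + (z - zh) = (\<Sum>i\<in>I. (\<rho> * max (h i (x,zh)) 0) *\<^sub>R a i (x,zh)) + (\<Sum>j\<in>J. (\<rho> * h j (x,zh)) *\<^sub>R a j (x,zh))"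
        using stationarity[OF lp G' mn] unfolding I_def J_def ag .
      define q where "q = (x, zh)"
      define e where "e = norm (y' - zh)"
      define u where "u = y' - zh"
      define \<omega> where "\<omega> = 2 * \<epsilon>1"
      have \<omega>0: "\<omega> \<ge> 0" "\<omega> \<le> (c/2) / 25" unfolding \<omega>_def \<epsilon>1_def using c by auto
      have dxx: "dist x xb < \<delta>" using x by (simp add: dist_commute)
      have dx'x: "dist x' xb < \<delta>" using x' by (simp add: dist_commute)
      have dyy: "dist y' yb < \<delta>" using y'b by (simp add: dist_commute)
      have \<eta>d: "\<eta> * d \<le> d / 10" using mult_right_mono[OF \<eta>02, of d] d0 by simp
      have dz: "dist z yb < 2 * \<delta>"
      proof -
        have "dist z yb \<le> dist z y' + dist y' yb" by (rule dist_triangle)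
        thus ?thesis using dyy dlt unfolding d_def by (simp add: dist_commute)
      qed
      have dzh: "dist zh yb < 3 * \<delta>"
      proof -
        have "dist zh yb \<le> dist zh z + dist z yb" by (rule dist_triangle)
        thus ?thesis using dz zhz \<eta>d dlt d0 by linarith
      qed
      have inB: "(x, v) \<in> ball pb r" if "dist v yb < 3 * \<delta>" for v
      proof -
        have "dist pb (x, v) \<le> dist xb x + dist yb v" unfolding pb_def by (rule dist_Pair_le)
        moreover have "dist xb x + dist yb v < r" using dxx that r(1) unfolding \<delta>_def by (simp add: dist_commute)
        ultimately show ?thesis by simp
      qed
      have inB': "(x', y') \<in> ball pb r"
      proof -
        have "dist pb (x', y') \<le> dist xb x' + dist yb y'" unfolding pb_def by (rule dist_Pair_le)
        moreover have "dist xb x' + dist yb y' < r" using dx'x dyy r(1) unfolding \<delta>_def by (simp add: dist_commute)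
        ultimately show ?thesis by simp
      qed
      have qB: "q \<in> ball pb r" unfolding q_def using inB dzh by blast
      have y'B: "(x, y') \<in> ball pb r" using inB dyy \<delta>0 by simp
      have "dist z yb < 3 * \<delta>" using dz \<delta>0 by linarith
      hence zB: "(x, z) \<in> ball pb r" using inB by blast
      have seg: "dist v yb < 3 * \<delta>" if "v \<in> closed_segment y' zh" for v
      proof -
        have "closed_segment y' zh \<subseteq> ball yb (3 * \<delta>)"
          using dyy dzh \<delta>0 by (intro closed_segment_subset convex_ball) (auto simp: dist_commute)
        thus ?thesis using that by (auto simp: dist_commute)
      qed
      have agr: "norm (a i (x, v) - b i) < \<epsilon>1" if "i \<in> {1..p}" "dist v yb < 3 * \<delta>" for i v
        using inO(2)[OF inB[OF that(2)] that(1)] by (simp add: dist_norm)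
      have tay: "\<bar>h i (x,y') - h i (x,zh) - a i q \<bullet> u\<bar> \<le> \<omega> * e" if i: "i \<in> {1..p}" for i
      proof -
        have "\<forall>v\<in>closed_segment y' zh. norm (grad_y (h i) x v - grad_y (h i) x zh) \<le> \<omega>"
        proof
          fix v assume "v \<in> closed_segment y' zh"
          hence "norm (a i (x, v) - b i) < \<epsilon>1" using agr[OF i seg] by blast
          moreover have "norm (a i (x, zh) - b i) < \<epsilon>1" using agr[OF i dzh] .
          ultimately have "norm (a i (x, v) - a i (x, zh)) < 2 * \<epsilon>1"
            using norm_triangle_lt[of "a i (x, v) - b i" "b i - a i (x, zh)" "2*\<epsilon>1"]
            by (simp add: norm_minus_commute)
          thus "norm (grad_y (h i) x v - grad_y (h i) x zh) \<le> \<omega>" unfolding ag \<omega>_def by simp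
        qed
        from taylor_y[OF G'[OF i] this] show ?thesis unfolding ag q_def u_def e_def by simp
      qed
      have lipx: "\<bar>h i (x,y') - h i (x',y')\<bar> \<le> M * t" if i: "i \<in> {1..p}" for i
        using Mlip[OF i inC[OF y'B] inC[OF inB']] unfolding t_def by (simp add: dist_Pair_same)
      have lipz: "\<bar>h i (x,zh) - h i (x,z)\<bar> \<le> M * (\<eta> * d)" if i: "i \<in> {1..p}" for i
      proof -
        have "\<bar>h i (x,zh) - h i (x,z)\<bar> \<le> M * dist (x,zh) (x,z)"
          using Mlip[OF i inC[OF qB[unfolded q_def]] inC[OF zB]] .
        also have "\<dots> \<le> M * (\<eta> * d)" using zhz M0 by (simp add: dist_Pair_same2 mult_left_mono)
        finally show ?thesis .
      qed
      have qU: "q \<in> U" using inO(1)[OF qB] .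
      have aq_close: "\<forall>i\<in>K \<union> Sb. norm (a i q - b i) \<le> \<epsilon>1" if "K \<subseteq> A" for K
      proof
        fix i assume iKS: "i \<in> K \<union> Sb"
        have "K \<union> Sb \<subseteq> {1..p}" using that AI I1p SbJ J1p by blast
        hence "i \<in> {1..p}" using iKS by blast
        thus "norm (a i q - b i) \<le> \<epsilon>1" using inO(2)[OF qB] by (simp add: dist_norm less_imp_le)
      qed
      have PB: "(c/2) * ((\<Sum>i\<in>K. \<alpha> i) + (\<Sum>i\<in>Sb. \<bar>\<beta> i\<bar>)) \<le> norm ((\<Sum>i\<in>K. \<alpha> i *\<^sub>R a i q) + (\<Sum>i\<in>Sb. \<beta> i *\<^sub>R a i q))"
        if K: "K \<subseteq> A" "\<not> pos_lin_dep K b Sb b" and nn: "\<forall>i\<in>K. 0 \<le> \<alpha> i" for K \<alpha> \<beta>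
      proof -
        have fK: "finite K" using K fA finite_subset by blast
        have N0: "0 \<le> (\<Sum>i\<in>K. \<alpha> i) + (\<Sum>i\<in>Sb. \<bar>\<beta> i\<bar>)" using nn by (intro add_nonneg_nonneg sum_nonneg) auto
        have "(c - \<epsilon>1) * ((\<Sum>i\<in>K. \<alpha> i) + (\<Sum>i\<in>Sb. \<bar>\<beta> i\<bar>)) \<le> norm ((\<Sum>i\<in>K. \<alpha> i *\<^sub>R a i q) + (\<Sum>i\<in>Sb. \<beta> i *\<^sub>R a i q))"
          by (rule lemA_perturb[OF aq_close[OF K(1)] fK fSb nn cK[OF K nn]])
        moreover have "(c/2) * ((\<Sum>i\<in>K. \<alpha> i) + (\<Sum>i\<in>Sb. \<bar>\<beta> i\<bar>)) \<le> (c - \<epsilon>1) * ((\<Sum>i\<in>K. \<alpha> i) + (\<Sum>i\<in>Sb. \<bar>\<beta> i\<bar>))"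
          using N0 c unfolding \<epsilon>1_def by (intro mult_right_mono) auto
        ultimately show ?thesis by linarith
      qed
      have indq: "\<not> lin_dep_fam Sb (\<lambda>i. a i q)"
      proof
        assume "lin_dep_fam Sb (\<lambda>i. a i q)"
        then obtain \<beta> where \<beta>: "\<exists>i\<in>Sb. \<beta> i \<noteq> 0" "(\<Sum>i\<in>Sb. \<beta> i *\<^sub>R a i q) = 0"
          unfolding lin_dep_fam_def by blast
        have "(c/2) * (\<Sum>i\<in>Sb. \<bar>\<beta> i\<bar>) \<le> norm (\<Sum>i\<in>Sb. \<beta> i *\<^sub>R a i q)"
          using PB[of "{}" "\<lambda>_. 0" \<beta>] emp by simp
        hence "(c/2) * (\<Sum>i\<in>Sb. \<bar>\<beta> i\<bar>) \<le> 0" using \<beta>(2) by simp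
        hence "(\<Sum>i\<in>Sb. \<bar>\<beta> i\<bar>) \<le> 0" using c by (simp add: mult_le_0_iff)
        hence "\<forall>i\<in>Sb. \<bar>\<beta> i\<bar> = 0" using fSb by (subst sum_nonneg_eq_0_iff[symmetric]) (auto intro: order.antisym sum_nonneg)
        thus False using \<beta>(1) by auto
      qed
      have dimq: "dim ((\<lambda>i. a i q) ` J) = card Sb"
      proof -
        have "dim ((\<lambda>i. a i q) ` J) = dim (b ` J)" using rank qU by blast
        also have "\<dots> = dim (b ` Sb)" using span_eq_dim[OF spn] by simp
        also have "\<dots> = card Sb" using indep_fam_facts(3)[OF fSb Sbind] .
        finally show ?thesis .
      qed
      obtain \<beta>0 where \<beta>0: "(\<Sum>j\<in>J. (\<rho> * h j q) *\<^sub>R a j q) = (\<Sum>s\<in>Sb. \<beta>0 s *\<^sub>R a s q)"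
        using span_conv[OF fJ SbJ indq dimq, of "\<lambda>j. \<rho> * h j q"] by blast
      define K0 where "K0 = {i\<in>I. 0 < h i q}"
      have K0A: "K0 \<subseteq> A"
      proof
        fix i assume i: "i \<in> K0"
        show "i \<in> A"
        proof (rule ccontr)
          assume "i \<notin> A"
          hence "h i q < 0" using inO(3)[OF qB] i unfolding K0_def by auto
          thus False using i unfolding K0_def by auto
        qed
      qed
      have fK0: "finite K0" using K0A fA finite_subset by blast
      have sumI: "(\<Sum>i\<in>I. (\<rho> * max (h i q) 0) *\<^sub>R a i q) = (\<Sum>i\<in>K0. (\<rho> * h i q) *\<^sub>R a i q)"
        by (rule sum.mono_neutral_cong_right) (use fI in \<open>auto simp: K0_def max_def\<close>)
      have vrep: "(y' - zh) + (z - zh) = (\<Sum>i\<in>K0. (\<rho> * h i q) *\<^sub>R a i q) + (\<Sum>s\<in>Sb. \<beta>0 s *\<^sub>R a s q)"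
        using stat sumI \<beta>0 unfolding q_def by simp
      have K0Sb: "K0 \<inter> Sb = {}" using K0A AI SbJ IJd by blast
      have nn0: "\<forall>i\<in>K0. 0 \<le> \<rho> * h i q" using \<rho> unfolding K0_def by auto
      obtain K' \<alpha>' \<beta>' where K': "K' \<subseteq> K0" "\<forall>i\<in>K'. 0 \<le> \<alpha>' i"
        "(\<Sum>i\<in>K0. (\<rho> * h i q) *\<^sub>R a i q) + (\<Sum>s\<in>Sb. \<beta>0 s *\<^sub>R a s q) = (\<Sum>i\<in>K'. \<alpha>' i *\<^sub>R a i q) + (\<Sum>i\<in>Sb. \<beta>' i *\<^sub>R a i q)"
        "\<not> lin_dep_fam (K' \<union> Sb) (\<lambda>i. a i q)"
        using carath[OF fK0 fSb K0Sb indq nn0, of \<beta>0] by blast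
      define v where "v = (y' - zh) + (z - zh)"
      define N where "N = (\<Sum>i\<in>K'. \<alpha>' i) + (\<Sum>i\<in>Sb. \<bar>\<beta>' i\<bar>)"
      have vK: "v = (\<Sum>i\<in>K'. \<alpha>' i *\<^sub>R a i q) + (\<Sum>i\<in>Sb. \<beta>' i *\<^sub>R a i q)"
        unfolding v_def using vrep K'(3) by simp
      have K'A: "K' \<subseteq> A" using K'(1) K0A by blast
      have npK': "\<not> pos_lin_dep K' b Sb b"
        using iii K'A K'(4) qU by blast
      have cN: "(c/2) * N \<le> norm v" unfolding N_def vK by (rule PB[OF K'A npK' K'(2)])
      define B where "B = M * t + M * \<eta> * d + \<omega> * e"
      have e0: "e \<ge> 0" unfolding e_def by simp
      have B0: "B \<ge> 0" unfolding B_def using M0 t0 \<eta>01 d0 \<omega>0 e0 by (intro add_nonneg_nonneg mult_nonneg_nonneg) auto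
      have bK: "\<forall>i\<in>K'. a i q \<bullet> u \<le> B"
      proof
        fix i assume "i \<in> K'"
        hence iK0: "i \<in> K0" using K'(1) by blast
        hence iI: "i \<in> I" and hq: "h i q > 0" unfolding K0_def by auto
        have i: "i \<in> {1..p}" using iI I1p by blast
        have "h i (x', y') \<le> 0" using y'F iI unfolding feas_def I_def by auto
        moreover have "\<bar>h i (x,y') - h i (x',y')\<bar> \<le> M * t" by (rule lipx[OF i])
        moreover have "\<bar>h i (x,y') - h i (x,zh) - a i q \<bullet> u\<bar> \<le> \<omega> * e" by (rule tay[OF i])
        moreover have "h i (x,zh) > 0" using hq unfolding q_def .
        moreover have "M * \<eta> * d \<ge> 0" using M0 \<eta>01 d0 by simp
        ultimately show "a i q \<bullet> u \<le> B" unfolding B_def by linarith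
      qed
      have bS: "\<forall>i\<in>Sb. \<bar>a i q \<bullet> u\<bar> \<le> B"
      proof
        fix i assume "i \<in> Sb"
        hence iJ: "i \<in> J" using SbJ by blast
        have i: "i \<in> {1..p}" using iJ J1p by blast
        have "h i (x', y') = 0" using y'F iJ unfolding feas_def J_def by auto
        moreover have "h i (x, z) = 0" using zG iJ unfolding Gx_def feas_def J_def by auto
        moreover have "\<bar>h i (x,y') - h i (x',y')\<bar> \<le> M * t" by (rule lipx[OF i])
        moreover have "\<bar>h i (x,y') - h i (x,zh) - a i q \<bullet> u\<bar> \<le> \<omega> * e" by (rule tay[OF i])
        moreover have "\<bar>h i (x,zh) - h i (x,z)\<bar> \<le> M * (\<eta> * d)" by (rule lipz[OF i])
        ultimately show "\<bar>a i q \<bullet> u\<bar> \<le> B" unfolding B_def by (simp add: mult.assoc)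
      qed
      have vu: "v \<bullet> u \<le> N * B" unfolding vK N_def by (rule sum_bound_inner[OF K'(2) bK bS])
      have N0: "N \<ge> 0" unfolding N_def using K'(2) by (intro add_nonneg_nonneg sum_nonneg) auto
      have m1: "(c/2) * (v \<bullet> u) \<le> norm v * B"
      proof -
        have "(c/2) * (v \<bullet> u) \<le> (c/2) * (N * B)" using vu c by (intro mult_left_mono) auto
        also have "\<dots> = ((c/2) * N) * B" by simp
        also have "\<dots> \<le> norm v * B" using cN B0 by (intro mult_right_mono) auto
        finally show ?thesis .
      qed
      have nzz: "norm (z - zh) \<le> \<eta> * d" using zhz by (simp add: dist_norm norm_minus_commute)
      have vu2: "v \<bullet> u \<ge> e^2 - \<eta> * d * e"
      proof -
        have "v \<bullet> u = u \<bullet> u + (z - zh) \<bullet> u" unfolding v_def u_def by (simp only: inner_add_left)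
        moreover have "u \<bullet> u = e^2" unfolding u_def e_def by (simp add: power2_norm_eq_inner)
        moreover have "\<bar>(z - zh) \<bullet> u\<bar> \<le> norm (z - zh) * norm u" by (rule Cauchy_Schwarz_ineq2)
        moreover have "norm (z - zh) * norm u \<le> \<eta> * d * e" unfolding u_def e_def using nzz by (intro mult_right_mono) auto
        ultimately show ?thesis by linarith
      qed
      have nv: "norm v \<le> e + \<eta> * d"
      proof -
        have "norm v \<le> norm (y' - zh) + norm (z - zh)" unfolding v_def by (rule norm_triangle_ineq)
        thus ?thesis using nzz unfolding e_def by linarith
      qed
      have ee1: "e \<ge> (1 - \<eta>) * d"
      proof -
        have "d \<le> e + norm (zh - z)" unfolding d_def e_def dist_norm
          using norm_triangle_ineq[of "y' - zh" "zh - z"] by simp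
        thus ?thesis using nzz by (simp add: norm_minus_commute algebra_simps)
      qed
      have ee2: "e \<le> (1 + \<eta>) * d"
      proof -
        have "e \<le> d + norm (z - zh)" unfolding d_def e_def dist_norm
          using norm_triangle_ineq[of "y' - z" "z - zh"] by simp
        thus ?thesis using nzz by (simp add: algebra_simps)
      qed
      have mainI: "(c/2) * (e^2 - \<eta> * d * e) \<le> (e + \<eta> * d) * (M * t + M * \<eta> * d + \<omega> * e)"
      proof -
        have "(c/2) * (e^2 - \<eta> * d * e) \<le> (c/2) * (v \<bullet> u)" using vu2 c by (intro mult_left_mono) auto
        also have "\<dots> \<le> norm v * B" by (rule m1)
        also have "\<dots> \<le> (e + \<eta> * d) * B" using nv B0 by (intro mult_right_mono) auto
        finally show ?thesis unfolding B_def .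
      qed
      have "d \<le> 3 * M * t / (c/2)"
        by (rule final_ineq[OF d0 _ M0 t0 less_imp_le[OF \<eta>01] \<eta>02 Meta \<omega>0 ee1 ee2 mainI]) (use c in simp)
      also have "\<dots> = \<kappa> * dist x x'" unfolding \<kappa>_def t_def by simp
      finally have "dist z y' \<le> \<kappa> * dist x x'" unfolding d_def by (simp add: dist_commute)
      thus ?thesis using zG unfolding Gx_def by blast
    qed
  qed
qed

lemma argmin_val:
  assumes "y \<in> argminset f h l p x"
  shows "optval f h l p x = ereal (f (x, y))"
  unfolding optval_def
proof (rule INF_eqI)
  show "ereal (f (x, y)) \<le> ereal (f (x, i))" if "i \<in> feas h l p x" for i
    using assms that unfolding argminset_def by auto
  show "y' \<le> ereal (f (x, y))" if "\<And>i. i \<in> feas h l p x \<Longrightarrow> y' \<le> ereal (f (x, i))" for y'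
    using that assms unfolding argminset_def by auto
qed

lemma finish:
  fixes f :: "(real^'n) \<times> (real^'m) \<Rightarrow> real"
  assumes e: "e > 0" and L: "L \<ge> 0" and ne: "\<forall>x\<in>ball xb e. argminset f h l p x \<noteq> {}"
    and key: "\<forall>x\<in>ball xb e. \<forall>x'\<in>ball xb e. \<exists>y'\<in>argminset f h l p x'. \<exists>z\<in>feas h l p x.
                 f (x, z) \<le> f (x', y') + L * dist x x'"
  shows "locally_lipschitz_at_ereal (optval f h l p) xb"
proof -
  have one: "real_of_ereal (optval f h l p x) \<le> real_of_ereal (optval f h l p x') + L * dist x x'"
    if x: "x \<in> ball xb e" and x': "x' \<in> ball xb e" for x x'
  proof -
    from key x x' obtain y' z where y': "y' \<in> argminset f h l p x'" and z: "z \<in> feas h l p x"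
      and fz: "f (x, z) \<le> f (x', y') + L * dist x x'" by blast
    from ne x obtain y where y: "y \<in> argminset f h l p x" by blast
    have "f (x, y) \<le> f (x, z)" using y z unfolding argminset_def by auto
    thus ?thesis using argmin_val[OF y] argmin_val[OF y'] fz by simp
  qed
  show ?thesis unfolding locally_lipschitz_at_ereal_def
  proof (rule exI[of _ e], rule conjI[OF e], rule exI[of _ L], intro conjI ballI)
    fix x assume "x \<in> ball xb e"
    then obtain y where "y \<in> argminset f h l p x" using ne by blast
    from argmin_val[OF this] show "\<bar>optval f h l p x\<bar> \<noteq> \<infinity>" by simp
  next
    show "L-lipschitz_on (ball xb e) (\<lambda>x. real_of_ereal (optval f h l p x))"
    proof (rule lipschitz_onI)
      fix x x' assume "x \<in> ball xb e" "x' \<in> ball xb e"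
      from one[OF this] one[OF this(2,1)]
      show "dist (real_of_ereal (optval f h l p x)) (real_of_ereal (optval f h l p x')) \<le> L * dist x x'"
        by (simp add: dist_real_def dist_commute abs_le_iff)
    qed (rule L)
  qed
qed

lemma case_b:
  fixes f :: "(real^'n) \<times> (real^'m) \<Rightarrow> real" and h :: "nat \<Rightarrow> (real^'n) \<times> (real^'m) \<Rightarrow> real"
  assumes lp: "l \<le> p" and C1f: "C1_fun f" and C1: "\<forall>i\<in>{1..p}. C1_fun (h i)"
    and yb: "yb \<in> argminset f h l p xb" and isc: "inner_semicont_at (argminset f h l p) xb yb"
    and R: "RCPLD h l p xb yb"
  shows "locally_lipschitz_at_ereal (optval f h l p) xb"
proof -
  have ybF: "yb \<in> feas h l p xb" using yb unfolding argminset_def by auto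
  obtain \<delta> \<kappa> where \<delta>: "\<delta> > 0" and \<kappa>: "\<kappa> \<ge> 0" and PL: "\<forall>x x' y' w. x \<in> ball xb \<delta> \<longrightarrow> x' \<in> ball xb \<delta> \<longrightarrow> y' \<in> feas h l p x' \<longrightarrow>
           y' \<in> ball yb \<delta> \<longrightarrow> w \<in> feas h l p x \<longrightarrow> dist w y' < \<delta> \<longrightarrow>
           (\<exists>z\<in>feas h l p x. dist z y' \<le> \<kappa> * dist x x')"
    using P_local[OF lp C1 ybF R] by blast
  have "\<exists>e0>0. \<forall>x\<in>ball xb e0. \<exists>y\<in>argminset f h l p x. dist y yb < \<delta>/2"
  proof (rule ccontr)
    assume "\<not> ?thesis"
    hence "\<forall>n. \<exists>x. x \<in> ball xb (1 / Suc n) \<and> (\<forall>y\<in>argminset f h l p x. \<not> dist y yb < \<delta>/2)"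
      by (metis of_nat_0_less_iff zero_less_Suc zero_less_divide_1_iff)
    then obtain X where X: "\<And>n. X n \<in> ball xb (1 / Suc n)" "\<And>n. \<forall>y\<in>argminset f h l p (X n). \<not> dist y yb < \<delta>/2"
      by metis
    have "X \<longlonglongrightarrow> xb"
    proof (subst tendsto_dist_iff, rule Lim_null_comparison)
      show "\<forall>\<^sub>F n in sequentially. norm (dist (X n) xb) \<le> inverse (real (Suc n))"
        using X(1) by (intro always_eventually allI) (simp add: dist_commute inverse_eq_divide less_imp_le)
      show "(\<lambda>n. inverse (real (Suc n))) \<longlonglongrightarrow> 0" by (rule LIMSEQ_inverse_real_of_nat)
    qed
    with isc obtain Y where Y: "Y \<longlonglongrightarrow> yb" "\<forall>\<^sub>F k in sequentially. Y k \<in> argminset f h l p (X k)"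
      unfolding inner_semicont_at_def by blast
    have "\<delta>/2 > 0" using \<delta> by simp
    hence "\<forall>\<^sub>F k in sequentially. dist (Y k) yb < \<delta>/2" using Y(1) unfolding tendsto_iff by blast
    with Y(2) have "\<forall>\<^sub>F k in sequentially. False"
      by eventually_elim (use X(2) in blast)
    thus False by simp
  qed
  then obtain e0 where e0: "e0 > 0" and near: "\<forall>x\<in>ball xb e0. \<exists>y\<in>argminset f h l p x. dist y yb < \<delta>/2"
    by blast
  obtain Lf where Lf: "Lf \<ge> 0" "\<forall>q\<in>cball (xb, yb) (3*\<delta>). \<forall>q'\<in>cball (xb, yb) (3*\<delta>). \<bar>f q - f q'\<bar> \<le> Lf * dist q q'"
    using C1_lip[OF C1f] by blast
  define e where "e = min e0 (min \<delta> (\<delta> / (2 * \<kappa> + 2)))"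
  have e: "e > 0" "e \<le> e0" "e \<le> \<delta>" "e \<le> \<delta> / (2 * \<kappa> + 2)" unfolding e_def using e0 \<delta> \<kappa> by auto
  show ?thesis
  proof (rule finish[OF e(1), of "Lf * (1 + \<kappa>)"])
    show "0 \<le> Lf * (1 + \<kappa>)" using Lf \<kappa> by simp
    show "\<forall>x\<in>ball xb e. argminset f h l p x \<noteq> {}" using near e by fastforce
    show "\<forall>x\<in>ball xb e. \<forall>x'\<in>ball xb e. \<exists>y'\<in>argminset f h l p x'. \<exists>z\<in>feas h l p x.
                 f (x, z) \<le> f (x', y') + Lf * (1 + \<kappa>) * dist x x'"
    proof (intro ballI)
      fix x x' assume x: "x \<in> ball xb e" and x': "x' \<in> ball xb e"
      obtain y' where y': "y' \<in> argminset f h l p x'" "dist y' yb < \<delta>/2" using near x' e by force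
      obtain w where w: "w \<in> argminset f h l p x" "dist w yb < \<delta>/2" using near x e by force
      have y'F: "y' \<in> feas h l p x'" and wF: "w \<in> feas h l p x" using y'(1) w(1) unfolding argminset_def by auto
      have "dist w y' \<le> dist w yb + dist y' yb" by (rule dist_triangle2)
      hence wy: "dist w y' < \<delta>" using w(2) y'(2) by linarith
      have xb: "x \<in> ball xb \<delta>" "x' \<in> ball xb \<delta>" using x x' e by auto
      have y'b: "y' \<in> ball yb \<delta>" using y'(2) \<delta> by (simp add: dist_commute)
      obtain z where z: "z \<in> feas h l p x" "dist z y' \<le> \<kappa> * dist x x'"
        using PL xb y'F y'b wF wy by blast
      have dxx: "dist x x' < 2 * e"
      proof -
        have "dist x x' \<le> dist x xb + dist x' xb" by (rule dist_triangle2)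
        thus ?thesis using x x' by (simp add: dist_commute)
      qed
      have "\<kappa> * dist x x' \<le> \<kappa> * (2 * e)" using dxx \<kappa> by (intro mult_left_mono) auto
      also have "\<dots> \<le> \<kappa> * (\<delta> / (\<kappa> + 1))" using e(4) \<kappa> by (intro mult_left_mono) (auto simp: field_simps)
      also have "\<dots> \<le> \<delta>" using \<kappa> \<delta> by (simp add: field_simps)
      finally have kd: "\<kappa> * dist x x' \<le> \<delta>" .
      have "dist z yb \<le> dist z y' + dist y' yb" by (rule dist_triangle)
      hence zyb: "dist z yb < 2 * \<delta>" using z(2) kd y'(2) \<delta> by linarith
      have q1: "(x, z) \<in> cball (xb, yb) (3*\<delta>)"
      proof -
        have "dist (xb, yb) (x, z) \<le> dist xb x + dist yb z" by (rule dist_Pair_le)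
        thus ?thesis using x zyb e(3) by (simp add: dist_commute)
      qed
      have q2: "(x', y') \<in> cball (xb, yb) (3*\<delta>)"
      proof -
        have "dist (xb, yb) (x', y') \<le> dist xb x' + dist yb y'" by (rule dist_Pair_le)
        thus ?thesis using x' y'(2) e(3) \<delta> by (simp add: dist_commute)
      qed
      have "f (x, z) \<le> f (x', y') + Lf * dist (x, z) (x', y')" using Lf(2) q1 q2 by force
      also have "Lf * dist (x, z) (x', y') \<le> Lf * (dist x x' + dist z y')"
        using Lf(1) dist_Pair_le by (intro mult_left_mono) auto
      also have "\<dots> \<le> Lf * (dist x x' + \<kappa> * dist x x')" using Lf(1) z(2) by (intro mult_left_mono) auto
      also have "\<dots> = Lf * (1 + \<kappa>) * dist x x'" by (simp add: algebra_simps)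
      finally have "f (x, z) \<le> f (x', y') + Lf * (1 + \<kappa>) * dist x x'" by simp
      thus "\<exists>y'\<in>argminset f h l p x'. \<exists>z\<in>feas h l p x. f (x, z) \<le> f (x', y') + Lf * (1 + \<kappa>) * dist x x'"
        using y'(1) z(1) by blast
    qed
  qed
qed

lemma graph_closed:
  assumes lp: "l \<le> p" and C1: "\<forall>i\<in>{1..p}. C1_fun (h i)"
  shows "closed {q. snd q \<in> feas h l p (fst q)}"
proof -
  have eq: "{q. snd q \<in> feas h l p (fst q)} = (\<Inter>i\<in>idxI l. {q. h i q \<le> 0}) \<inter> (\<Inter>i\<in>idxJ l p. {q. h i q = 0})"
    unfolding feas_def by auto
  have c: "continuous_on UNIV (h i)" if "i \<in> {1..p}" for i using C1_cont C1 that by blast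
  show ?thesis unfolding eq
    using IJ_facts[OF lp] c
    by (intro closed_Int closed_INT ballI closed_Collect_le closed_Collect_eq) (auto intro: continuous_intros)
qed

lemma feas_convex:
  assumes cI: "\<forall>i\<in>idxI l. convex_on UNIV (\<lambda>y. h i (x, y))"
    and aJ: "\<forall>i\<in>idxJ l p. \<exists>a b. \<forall>y. h i (x, y) = inner a y + b"
  shows "convex (feas h l p x)"
proof (rule convexI)
  fix y1 y2 and u v :: real
  assume y: "y1 \<in> feas h l p x" "y2 \<in> feas h l p x" and uv: "0 \<le> u" "0 \<le> v" "u + v = 1"
  have "h i (x, u *\<^sub>R y1 + v *\<^sub>R y2) \<le> 0" if i: "i \<in> idxI l" for i
  proof -
    have "v \<le> 1" using uv by simp
    from convex_onD[OF cI[rule_format, OF i] uv(2) this, of y1 y2]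
    have "h i (x, (1 - v) *\<^sub>R y1 + v *\<^sub>R y2) \<le> (1 - v) * h i (x, y1) + v * h i (x, y2)" by simp
    moreover have "1 - v = u" using uv by simp
    moreover have "h i (x, y1) \<le> 0" "h i (x, y2) \<le> 0" using y i unfolding feas_def by auto
    ultimately show ?thesis using uv
      by (smt (verit) mult_nonneg_nonpos)
  qed
  moreover have "h i (x, u *\<^sub>R y1 + v *\<^sub>R y2) = 0" if i: "i \<in> idxJ l p" for i
  proof -
    obtain a b where ab: "\<forall>y. h i (x, y) = inner a y + b" using aJ i by blast
    have "inner a y1 + b = 0" "inner a y2 + b = 0" using y i ab unfolding feas_def by auto
    hence e1: "inner a y1 = - b" "inner a y2 = - b" by linarith+
    have "inner a (u *\<^sub>R y1 + v *\<^sub>R y2) = u * inner a y1 + v * inner a y2" by (simp add: inner_add_right)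
    also have "\<dots> = - ((u + v) * b)" unfolding e1 by (simp add: algebra_simps)
    finally have "inner a (u *\<^sub>R y1 + v *\<^sub>R y2) = - b" using uv(3) by simp
    with ab show ?thesis by simp
  qed
  ultimately show "u *\<^sub>R y1 + v *\<^sub>R y2 \<in> feas h l p x" unfolding feas_def by auto
qed

lemma usc:
  fixes h :: "nat \<Rightarrow> (real^'n) \<times> (real^'m) \<Rightarrow> real"
  assumes lp: "l \<le> p" and C1: "\<forall>i\<in>{1..p}. C1_fun (h i)"
    and V0: "open V0" "xb \<in> V0" and B0: "bounded B0" "\<forall>x\<in>V0. feas h l p x \<subseteq> B0" and eps: "\<epsilon> > 0"
  shows "\<exists>e>0. \<forall>x\<in>ball xb e. \<forall>y\<in>feas h l p x. \<exists>u\<in>feas h l p xb. dist y u < \<epsilon>"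
proof (rule ccontr)
  obtain \<rho>0 where \<rho>0: "\<rho>0 > 0" "ball xb \<rho>0 \<subseteq> V0" using V0 open_contains_ball by blast
  assume neg: "\<not> ?thesis"
  have "\<forall>n. \<exists>x y. x \<in> ball xb (min \<rho>0 (1 / Suc n)) \<and> y \<in> feas h l p x \<and> (\<forall>u\<in>feas h l p xb. \<not> dist y u < \<epsilon>)"
  proof
    fix n
    define e where "e = min \<rho>0 (1 / Suc n)"
    have "e > 0" unfolding e_def using \<rho>0(1) by simp
    with neg obtain x where x: "x \<in> ball xb e" "\<not> (\<forall>y\<in>feas h l p x. \<exists>u\<in>feas h l p xb. dist y u < \<epsilon>)" by blast
    then obtain y where "y \<in> feas h l p x" "\<forall>u\<in>feas h l p xb. \<not> dist y u < \<epsilon>" by blast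
    thus "\<exists>x y. x \<in> ball xb (min \<rho>0 (1 / Suc n)) \<and> y \<in> feas h l p x \<and> (\<forall>u\<in>feas h l p xb. \<not> dist y u < \<epsilon>)"
      using x(1) unfolding e_def by blast
  qed
  then obtain X Y where XY: "\<And>n. X n \<in> ball xb (min \<rho>0 (1 / Suc n))" "\<And>n. Y n \<in> feas h l p (X n)"
    "\<And>n. \<forall>u\<in>feas h l p xb. \<not> dist (Y n) u < \<epsilon>" by metis
  have XV: "X n \<in> V0" for n using XY(1)[of n] \<rho>0(2) by auto
  have "bounded (range Y)" using B0 XV XY(2) by (meson bounded_subset image_subset_iff subsetD)
  then obtain yl r where r: "strict_mono r" and lim: "(Y \<circ> r) \<longlonglongrightarrow> yl"
    using bounded_imp_convergent_subsequence by blast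
  have "X \<longlonglongrightarrow> xb"
  proof (subst tendsto_dist_iff, rule Lim_null_comparison)
    show "\<forall>\<^sub>F n in sequentially. norm (dist (X n) xb) \<le> inverse (real (Suc n))"
      using XY(1) by (intro always_eventually allI) (simp add: dist_commute inverse_eq_divide less_imp_le)
    show "(\<lambda>n. inverse (real (Suc n))) \<longlonglongrightarrow> 0" by (rule LIMSEQ_inverse_real_of_nat)
  qed
  hence "(X \<circ> r) \<longlonglongrightarrow> xb" using LIMSEQ_subseq_LIMSEQ r by blast
  hence tl: "(\<lambda>n. (X (r n), Y (r n))) \<longlonglongrightarrow> (xb, yl)" using lim unfolding o_def by (intro tendsto_Pair)
  have inG: "(X (r n), Y (r n)) \<in> {q. snd q \<in> feas h l p (fst q)}" for n using XY(2) by simp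
  have "(xb, yl) \<in> {q. snd q \<in> feas h l p (fst q)}"
    by (rule closed_sequentially[OF graph_closed[OF lp C1] inG tl])
  hence ylF: "yl \<in> feas h l p xb" by simp
  have "\<forall>\<^sub>F n in sequentially. dist (Y (r n)) yl < \<epsilon>" using lim eps unfolding o_def tendsto_iff by blast
  then obtain n where "dist (Y (r n)) yl < \<epsilon>" by (meson eventually_sequentially le_refl)
  with XY(3) ylF show False by blast
qed

lemma P_unif:
  fixes h :: "nat \<Rightarrow> (real^'n) \<times> (real^'m) \<Rightarrow> real"
  assumes lp: "l \<le> p" and C1: "\<forall>i\<in>{1..p}. C1_fun (h i)"
    and cpt: "compact (feas h l p xb)" and ne: "feas h l p xb \<noteq> {}"
    and R: "\<forall>y\<in>feas h l p xb. RCPLD h l p xb y"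
  shows "\<exists>\<delta>0>0. \<exists>\<kappa>0\<ge>0. \<forall>u\<in>feas h l p xb. \<forall>x x' y' w. x \<in> ball xb \<delta>0 \<longrightarrow> x' \<in> ball xb \<delta>0 \<longrightarrow>
      y' \<in> feas h l p x' \<longrightarrow> dist y' u < \<delta>0 \<longrightarrow> w \<in> feas h l p x \<longrightarrow> dist w y' < \<delta>0 \<longrightarrow>
      (\<exists>z\<in>feas h l p x. dist z y' \<le> \<kappa>0 * dist x x')"
proof -
  define Gb where "Gb = feas h l p xb"
  define Q where "Q yb \<delta> \<kappa> \<longleftrightarrow> (\<forall>x x' y' w. x \<in> ball xb \<delta> \<longrightarrow> x' \<in> ball xb \<delta> \<longrightarrow> y' \<in> feas h l p x' \<longrightarrow>
           y' \<in> ball yb \<delta> \<longrightarrow> w \<in> feas h l p x \<longrightarrow> dist w y' < \<delta> \<longrightarrow>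
           (\<exists>z\<in>feas h l p x. dist z y' \<le> \<kappa> * dist x x'))" for yb \<delta> \<kappa>
  have "\<forall>yb\<in>Gb. \<exists>\<delta>. \<delta> > 0 \<and> (\<exists>\<kappa>. \<kappa> \<ge> 0 \<and> Q yb \<delta> \<kappa>)"
    using P_local[OF lp C1] R unfolding Gb_def Q_def by blast
  then obtain D where D: "\<forall>yb\<in>Gb. D yb > 0 \<and> (\<exists>\<kappa>. \<kappa> \<ge> 0 \<and> Q yb (D yb) \<kappa>)" by metis
  then obtain K where K: "\<forall>yb\<in>Gb. D yb > 0 \<and> K yb \<ge> 0 \<and> Q yb (D yb) (K yb)" by metis
  have "Gb \<subseteq> (\<Union>yb\<in>Gb. ball yb (D yb / 2))" using K by force
  then obtain T where T: "T \<subseteq> Gb" "finite T" "Gb \<subseteq> (\<Union>yb\<in>T. ball yb (D yb / 2))"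
    using compactE_image[OF cpt[folded Gb_def], of Gb "\<lambda>yb. ball yb (D yb / 2)"] by blast
  have Tne: "T \<noteq> {}" using T(3) ne unfolding Gb_def by auto
  define \<delta>0 where "\<delta>0 = Min ((\<lambda>yb. D yb / 2) ` T)"
  define \<kappa>0 where "\<kappa>0 = Max (K ` T)"
  have \<delta>0: "\<delta>0 > 0" unfolding \<delta>0_def using T Tne K by (subst Min_gr_iff) auto
  have \<delta>0le: "\<delta>0 \<le> D v / 2" if "v \<in> T" for v unfolding \<delta>0_def using T(2) that by (intro Min_le) auto
  have \<kappa>0le: "K v \<le> \<kappa>0" if "v \<in> T" for v unfolding \<kappa>0_def using T that by auto
  have \<kappa>0: "\<kappa>0 \<ge> 0" using \<kappa>0le Tne K T(1) by (meson ex_in_conv order.trans subsetD)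
  show ?thesis
  proof (rule exI[of _ \<delta>0], rule conjI[OF \<delta>0], rule exI[of _ \<kappa>0], rule conjI[OF \<kappa>0], intro ballI allI impI)
    fix u x x' y' w
    assume u: "u \<in> feas h l p xb" and x: "x \<in> ball xb \<delta>0" and x': "x' \<in> ball xb \<delta>0"
      and y'F: "y' \<in> feas h l p x'" and y'u: "dist y' u < \<delta>0" and wF: "w \<in> feas h l p x" and wy: "dist w y' < \<delta>0"
    obtain v where v: "v \<in> T" "dist v u < D v / 2" using T(3) u unfolding Gb_def by auto
    have vG: "v \<in> Gb" using v T by auto
    have le: "\<delta>0 \<le> D v / 2" by (rule \<delta>0le[OF v(1)])
    have Dv: "D v > 0" using K vG by blast
    have "x \<in> ball xb (D v)" "x' \<in> ball xb (D v)" using x x' le Dv by auto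
    moreover have "y' \<in> ball v (D v)"
    proof -
      have "dist v y' \<le> dist v u + dist y' u" by (rule dist_triangle2)
      thus ?thesis using v(2) y'u le by simp
    qed
    moreover have "dist w y' < D v" using wy le Dv by linarith
    ultimately obtain z where z: "z \<in> feas h l p x" "dist z y' \<le> K v * dist x x'"
      using K vG y'F wF unfolding Q_def by blast
    have "K v * dist x x' \<le> \<kappa>0 * dist x x'" using \<kappa>0le[OF v(1)] by (intro mult_right_mono) auto
    thus "\<exists>z\<in>feas h l p x. dist z y' \<le> \<kappa>0 * dist x x'" using z by force
  qed
qed

lemma lsc:
  fixes h :: "nat \<Rightarrow> (real^'n) \<times> (real^'m) \<Rightarrow> real"
  assumes lp: "l \<le> p" and C1: "\<forall>i\<in>{1..p}. C1_fun (h i)"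
    and conv0: "convex (feas h l p xb)"
    and PU: "\<forall>u\<in>feas h l p xb. \<forall>x x' y' w. x \<in> ball xb \<delta>0 \<longrightarrow> x' \<in> ball xb \<delta>0 \<longrightarrow>
      y' \<in> feas h l p x' \<longrightarrow> dist y' u < \<delta>0 \<longrightarrow> w \<in> feas h l p x \<longrightarrow> dist w y' < \<delta>0 \<longrightarrow>
      (\<exists>z\<in>feas h l p x. dist z y' \<le> \<kappa>0 * dist x x')"
    and \<delta>0: "\<delta>0 > 0" and x: "dist x xb < \<delta>0" and xk: "\<kappa>0 * dist x xb < \<delta>0 / 2"
    and nex: "feas h l p x \<noteq> {}"
    and uscx: "\<forall>y\<in>feas h l p x. \<exists>u\<in>feas h l p xb. dist y u < \<delta>0"
  shows "\<forall>u\<in>feas h l p xb. \<exists>w\<in>feas h l p x. dist w u \<le> \<kappa>0 * dist x xb"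
proof -
  define S where "S = feas h l p x"
  define Gb where "Gb = feas h l p xb"
  define D where "D u = infdist u S" for u
  have clS: "closed S" unfolding S_def by (rule closed_feas[OF lp C1])
  have xin: "x \<in> ball xb \<delta>0" "xb \<in> ball xb \<delta>0" using x \<delta>0 by (auto simp: dist_commute)
  have dich: "\<exists>z\<in>S. dist z u \<le> \<kappa>0 * dist x xb" if u: "u \<in> Gb" and Du: "D u < \<delta>0" for u
  proof -
    obtain w where w: "w \<in> S" "infdist u S = dist u w" using infdist_attains_inf[OF clS] nex S_def by metis
    have "dist w u < \<delta>0" using w Du unfolding D_def by (simp add: dist_commute)
    moreover have "dist u u < \<delta>0" using \<delta>0 by simp
    ultimately show ?thesis using PU u xin w(1) unfolding Gb_def S_def by blast
  qed
  have dich2: "D u < \<delta>0 / 2" if u: "u \<in> Gb" and Du: "D u < \<delta>0" for u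
  proof -
    obtain z where z: "z \<in> S" "dist z u \<le> \<kappa>0 * dist x xb" using dich[OF u Du] by blast
    have "D u \<le> dist u z" unfolding D_def by (rule infdist_le[OF z(1)])
    thus ?thesis using z(2) xk by (simp add: dist_commute)
  qed
  obtain w0 where w0: "w0 \<in> S" using nex S_def by blast
  obtain u0 where u0: "u0 \<in> Gb" "dist w0 u0 < \<delta>0" using uscx w0 unfolding S_def Gb_def by blast
  have Du0: "D u0 < \<delta>0"
  proof -
    have "D u0 \<le> dist u0 w0" unfolding D_def by (rule infdist_le[OF w0])
    thus ?thesis using u0(2) by (simp add: dist_commute)
  qed
  have all: "D u < \<delta>0" if u: "u \<in> Gb" for u
  proof (rule ccontr)
    assume "\<not> D u < \<delta>0"
    hence Du: "D u \<ge> \<delta>0" by simp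
    have con: "connected (D ` Gb)"
      by (rule connected_continuous_image) (use conv0 convex_connected in \<open>auto simp: Gb_def D_def intro!: continuous_intros\<close>)
    have "D u0 \<in> D ` Gb" "D u \<in> D ` Gb" using u0 u by auto
    moreover have "D u0 \<le> 3 * \<delta>0 / 4" "3 * \<delta>0 / 4 \<le> D u" using dich2[OF u0(1) Du0] Du \<delta>0 by auto
    ultimately have "3 * \<delta>0 / 4 \<in> D ` Gb" using connectedD_interval[OF con] by blast
    then obtain u2 where u2: "u2 \<in> Gb" "D u2 = 3 * \<delta>0 / 4" by auto
    hence "D u2 < \<delta>0" using \<delta>0 by simp
    from dich2[OF u2(1) this] u2(2) \<delta>0 show False by simp
  qed
  show ?thesis using dich all unfolding S_def Gb_def by blast
qed

lemma case_a:
  fixes f :: "(real^'n) \<times> (real^'m) \<Rightarrow> real" and h :: "nat \<Rightarrow> (real^'n) \<times> (real^'m) \<Rightarrow> real"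
  assumes lp: "l \<le> p" and C1f: "C1_fun f" and C1: "\<forall>i\<in>{1..p}. C1_fun (h i)"
    and dom: "xb \<in> domset (feas h l p)"
    and conv: "\<forall>x. (\<forall>i\<in>idxI l. convex_on UNIV (\<lambda>y. h i (x, y))) \<and> (\<forall>i\<in>idxJ l p. \<exists>a b. \<forall>y. h i (x, y) = inner a y + b)"
    and lb: "locally_bounded_at (feas h l p) xb" and R: "\<forall>y\<in>feas h l p xb. RCPLD h l p xb y"
    and int: "xb \<in> interior (domset (feas h l p))"
  shows "locally_lipschitz_at_ereal (optval f h l p) xb"
proof -
  have Gne: "feas h l p xb \<noteq> {}" using dom unfolding domset_def by simp
  obtain B0 V0 where B0: "bounded B0" and V0: "open V0" "xb \<in> V0" and BV: "\<forall>x\<in>V0. feas h l p x \<subseteq> B0"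
    using lb unfolding locally_bounded_at_def by blast
  have cpt: "compact (feas h l p xb)"
    unfolding compact_eq_bounded_closed using closed_feas[OF lp C1] BV V0 B0 bounded_subset by blast
  have conv0: "convex (feas h l p xb)" using feas_convex conv by blast
  obtain \<delta>0 \<kappa>0 where \<delta>0: "\<delta>0 > 0" and \<kappa>0: "\<kappa>0 \<ge> 0" and PU: "\<forall>u\<in>feas h l p xb. \<forall>x x' y' w. x \<in> ball xb \<delta>0 \<longrightarrow> x' \<in> ball xb \<delta>0 \<longrightarrow>
      y' \<in> feas h l p x' \<longrightarrow> dist y' u < \<delta>0 \<longrightarrow> w \<in> feas h l p x \<longrightarrow> dist w y' < \<delta>0 \<longrightarrow>
      (\<exists>z\<in>feas h l p x. dist z y' \<le> \<kappa>0 * dist x x')"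
    using P_unif[OF lp C1 cpt Gne R] by blast
  obtain e1 where e1: "e1 > 0" "ball xb e1 \<subseteq> domset (feas h l p)" using int mem_interior by blast
  obtain \<rho>0 where \<rho>0: "\<rho>0 > 0" "ball xb \<rho>0 \<subseteq> V0" using V0 open_contains_ball by blast
  obtain eu1 where eu1: "eu1 > 0" "\<forall>x\<in>ball xb eu1. \<forall>y\<in>feas h l p x. \<exists>u\<in>feas h l p xb. dist y u < \<delta>0"
    using usc[OF lp C1 V0 B0 BV \<delta>0] by blast
  have "\<delta>0 / 2 > 0" using \<delta>0 by simp
  then obtain eu2 where eu2: "eu2 > 0" "\<forall>x\<in>ball xb eu2. \<forall>y\<in>feas h l p x. \<exists>u\<in>feas h l p xb. dist y u < \<delta>0 / 2"
    using usc[OF lp C1 V0 B0 BV] by blast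
  obtain Rb where Rb: "\<forall>y\<in>B0. norm y \<le> Rb" using B0 bounded_iff by blast
  define e where "e = min (min e1 \<rho>0) (min (min eu1 eu2) (min 1 (min \<delta>0 (\<delta>0 / (2 * \<kappa>0 + 2)))))"
  have e: "e > 0" "e \<le> e1" "e \<le> \<rho>0" "e \<le> eu1" "e \<le> eu2" "e \<le> 1" "e \<le> \<delta>0" "e \<le> \<delta>0 / (2 * \<kappa>0 + 2)"
    unfolding e_def using e1 \<rho>0 eu1 eu2 \<delta>0 \<kappa>0 by auto
  define RR where "RR = norm xb + 2 + Rb + 2 * \<kappa>0"
  obtain Lf where Lf: "Lf \<ge> 0" "\<forall>q\<in>cball 0 RR. \<forall>q'\<in>cball 0 RR. \<bar>f q - f q'\<bar> \<le> Lf * dist q q'"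
    using C1_lip[OF C1f] by blast
  have inV: "x \<in> V0" if "x \<in> ball xb e" for x using that e \<rho>0 by auto
  have nefeas: "feas h l p x \<noteq> {}" if "x \<in> ball xb e" for x
  proof -
    have "x \<in> ball xb e1" using that e by auto
    thus ?thesis using e1(2) unfolding domset_def by blast
  qed
  have ne: "argminset f h l p x \<noteq> {}" if x: "x \<in> ball xb e" for x
  proof -
    have "compact (feas h l p x)"
      unfolding compact_eq_bounded_closed using closed_feas[OF lp C1] BV inV[OF x] B0 bounded_subset by blast
    moreover have "continuous_on (feas h l p x) (\<lambda>y. f (x, y))" by (rule h_cont_y[OF C1f])
    ultimately obtain y where "y \<in> feas h l p x" "\<forall>y'\<in>feas h l p x. f (x, y) \<le> f (x, y')"
      using continuous_attains_inf[of "feas h l p x" "\<lambda>y. f (x, y)"] nefeas[OF x] by blast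
    thus ?thesis unfolding argminset_def by blast
  qed
  show ?thesis
  proof (rule finish[OF e(1), of "Lf * (1 + \<kappa>0)"])
    show "0 \<le> Lf * (1 + \<kappa>0)" using Lf \<kappa>0 by simp
    show "\<forall>x\<in>ball xb e. argminset f h l p x \<noteq> {}" using ne by blast
    show "\<forall>x\<in>ball xb e. \<forall>x'\<in>ball xb e. \<exists>y'\<in>argminset f h l p x'. \<exists>z\<in>feas h l p x.
                 f (x, z) \<le> f (x', y') + Lf * (1 + \<kappa>0) * dist x x'"
    proof (intro ballI)
      fix x x' assume x: "x \<in> ball xb e" and x': "x' \<in> ball xb e"
      obtain y' where y': "y' \<in> argminset f h l p x'" using ne[OF x'] by blast
      have y'F: "y' \<in> feas h l p x'" using y' unfolding argminset_def by auto
      obtain u where u: "u \<in> feas h l p xb" "dist y' u < \<delta>0 / 2" using eu2(2) x' e y'F by force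
      have dx: "dist x xb < e" using x by (simp add: dist_commute)
      have "\<kappa>0 * dist x xb \<le> \<kappa>0 * (\<delta>0 / (2 * \<kappa>0 + 2))" using dx e(8) \<kappa>0 by (intro mult_left_mono) auto
      also have "\<dots> < \<delta>0 / 2" using \<kappa>0 \<delta>0 by (simp add: field_simps)
      finally have xk: "\<kappa>0 * dist x xb < \<delta>0 / 2" .
      have uscx: "\<forall>y\<in>feas h l p x. \<exists>u\<in>feas h l p xb. dist y u < \<delta>0" using eu1(2) x e by force
      have "dist x xb < \<delta>0" using dx e by simp
      from lsc[OF lp C1 conv0 PU \<delta>0 this xk nefeas[OF x] uscx] u(1)
      obtain w where w: "w \<in> feas h l p x" "dist w u \<le> \<kappa>0 * dist x xb" by blast
      have "dist w y' \<le> dist w u + dist y' u" by (rule dist_triangle2)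
      hence wy: "dist w y' < \<delta>0" using w(2) xk u(2) by linarith
      have xx: "x \<in> ball xb \<delta>0" "x' \<in> ball xb \<delta>0" using x x' e by auto
      have yu: "dist y' u < \<delta>0" using u(2) \<delta>0 by linarith
      obtain z where z: "z \<in> feas h l p x" "dist z y' \<le> \<kappa>0 * dist x x'"
        using PU u(1) xx y'F yu w(1) wy by blast
      have dxx: "dist x x' < 2"
      proof -
        have "dist x x' \<le> dist x xb + dist x' xb" by (rule dist_triangle2)
        thus ?thesis using x x' e(6) by (simp add: dist_commute)
      qed
      have "\<kappa>0 * dist x x' \<le> \<kappa>0 * 2" using dxx \<kappa>0 by (intro mult_left_mono) auto
      hence kz: "\<kappa>0 * dist x x' \<le> 2 * \<kappa>0" by simp
      have y'B: "norm y' \<le> Rb" using Rb BV inV[OF x'] y'F by blast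
      have nx: "norm x \<le> norm xb + 1"
        using norm_triangle_ineq2[of x xb] dx e(6) by (simp add: dist_norm)
      have nx': "norm x' \<le> norm xb + 1"
        using norm_triangle_ineq2[of x' xb] x' e(6) by (simp add: dist_norm norm_minus_commute)
      have nz: "norm z \<le> Rb + 2 * \<kappa>0"
        using norm_triangle_ineq2[of z y'] z(2) kz y'B by (simp add: dist_norm)
      have q1: "(x, z) \<in> cball 0 RR"
        using norm_Pair_le[of x z] nx nz unfolding RR_def by simp
      have q2: "(x', y') \<in> cball 0 RR"
        using norm_Pair_le[of x' y'] nx' y'B \<kappa>0 unfolding RR_def by simp
      have "f (x, z) \<le> f (x', y') + Lf * dist (x, z) (x', y')" using Lf(2) q1 q2 by force
      also have "Lf * dist (x, z) (x', y') \<le> Lf * (dist x x' + dist z y')"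
        using Lf(1) dist_Pair_le by (intro mult_left_mono) auto
      also have "\<dots> \<le> Lf * (dist x x' + \<kappa>0 * dist x x')" using Lf(1) z(2) by (intro mult_left_mono) auto
      also have "\<dots> = Lf * (1 + \<kappa>0) * dist x x'" by (simp add: algebra_simps)
      finally have "f (x, z) \<le> f (x', y') + Lf * (1 + \<kappa>0) * dist x x'" by simp
      thus "\<exists>y'\<in>argminset f h l p x'. \<exists>z\<in>feas h l p x. f (x, z) \<le> f (x', y') + Lf * (1 + \<kappa>0) * dist x x'"
        using y' z(1) by blast
    qed
  qed
qed

theorem corollary4p4:
  fixes f :: "(real^'n) \<times> (real^'m) \<Rightarrow> real"
    and h :: "nat \<Rightarrow> (real^'n) \<times> (real^'m) \<Rightarrow> real"
    and l p :: nat
    and xb :: "real^'n"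
  assumes "l \<le> p"
    and "C1_fun f"
    and "\<forall>i\<in>{1..p}. C1_fun (h i)"
    and "xb \<in> domset (feas h l p)"
    and "((\<forall>x. (\<forall>i\<in>idxI l. convex_on UNIV (\<lambda>y. h i (x, y))) \<and>
               (\<forall>i\<in>idxJ l p. \<exists>a b. \<forall>y. h i (x, y) = inner a y + b))
          \<and> locally_bounded_at (feas h l p) xb
          \<and> (\<forall>y\<in>feas h l p xb. RCPLD h l p xb y)
          \<and> xb \<in> interior (domset (feas h l p)))
       \<or> (\<exists>yb\<in>argminset f h l p xb. inner_semicont_at (argminset f h l p) xb yb \<and> RCPLD h l p xb yb)"
  shows "locally_lipschitz_at_ereal (optval f h l p) xb"
proof -
  from assms(5) show ?thesis
  proof
    assume H: "(\<forall>x. (\<forall>i\<in>idxI l. convex_on UNIV (\<lambda>y. h i (x, y))) \<and>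
               (\<forall>i\<in>idxJ l p. \<exists>a b. \<forall>y. h i (x, y) = inner a y + b))
          \<and> locally_bounded_at (feas h l p) xb
          \<and> (\<forall>y\<in>feas h l p xb. RCPLD h l p xb y)
          \<and> xb \<in> interior (domset (feas h l p))"
    show ?thesis
      by (rule case_a[OF assms(1) assms(2) assms(3) assms(4)]) (use H in blast)+
  next
    assume "\<exists>yb\<in>argminset f h l p xb. inner_semicont_at (argminset f h l p) xb yb \<and> RCPLD h l p xb yb"
    then obtain yb where yb: "yb \<in> argminset f h l p xb" "inner_semicont_at (argminset f h l p) xb yb" "RCPLD h l p xb yb"
      by blast
    show ?thesis by (rule case_b[OF assms(1) assms(2) assms(3) yb])
  qed
qed

end
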